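(* Let $\Omega$ be a verification operator for $|\Psi\rangle$ with second largest eigenvalue $\beta$ and smallest eigenvalue $\tau$, and $N\ge1$ an integer. Then $\eta(N,0,\Omega)=\delta_{\mathrm c}$, where $\delta_{\mathrm c}=\beta^N$ if $\tau>0$ and $\delta_{\mathrm c}=\max\{\beta^N,1/(N+1)\}$ if $\tau=0$.
   Context: Let $\mathcal H$ be a Hilbert space of finite dimension $D\ge2$ and $|\Psi\rangle\in\mathcal H$ a unit vector. A verification operator for $|\Psi\rangle$ is a Hermitian operator $\Omega$ on $\mathcal H$ with $0\le\Omega\le1$, $\Omega|\Psi\rangle=|\Psi\rangle$, whose eigenvalue $1$ is nondegenerate. For a density operator $\rho$ on $\mathcal H^{\otimes(N+1)}$ put $p_\rho=\mathrm{tr}[(\Omega^{\otimes N}\otimes1)\rho]$ and $f_\rho=\mathrm{tr}[(\Omega^{\otimes N}\otimes|\Psi\rangle\langle\Psi|)\rho]$, and for $0\le f\le1$ let $\eta(N,f,\Omega)=\max\{p_\rho:f_\rho\le f\}$, the maximum over permutation-invariant density operators on $\mathcal H^{\otimes(N+1)}$. *)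

theory Defs
  imports "HOL-Analysis.Analysis"
begin

text \<open>The Hilbert space H is C^D with
standard basis indexed by {..<D}; vectors are functions nat => complex
(only values on {..<D} matter), operators on H are matrices
nat => nat => complex.  The space H^(tensor n) has the product basis indexed by
lists of length n with entries in {..<D}; operators on it are matrices
nat list => nat list => complex.\<close>

definition basis_idx :: "nat \<Rightarrow> nat \<Rightarrow> nat list set" where
  "basis_idx D n = {xs. length xs = n \<and> set xs \<subseteq> {..<D}}"

definition sqnorm :: "nat \<Rightarrow> (nat \<Rightarrow> complex) \<Rightarrow> real" where
  "sqnorm D v = (\<Sum>i<D. (cmod (v i))\<^sup>2)"

definition hermitian :: "nat \<Rightarrow> (nat \<Rightarrow> nat \<Rightarrow> complex) \<Rightarrow> bool" where
  "hermitian D A \<longleftrightarrow> (\<forall>i<D. \<forall>j<D. A j i = cnj (A i j))"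

definition qform :: "nat \<Rightarrow> (nat \<Rightarrow> nat \<Rightarrow> complex) \<Rightarrow> (nat \<Rightarrow> complex) \<Rightarrow> complex" where
  "qform D A v = (\<Sum>i<D. \<Sum>j<D. cnj (v i) * A i j * v j)"

definition apply_op :: "nat \<Rightarrow> (nat \<Rightarrow> nat \<Rightarrow> complex) \<Rightarrow> (nat \<Rightarrow> complex) \<Rightarrow> nat \<Rightarrow> complex" where
  "apply_op D A v i = (\<Sum>j<D. A i j * v j)"

definition is_eigenvalue :: "nat \<Rightarrow> (nat \<Rightarrow> nat \<Rightarrow> complex) \<Rightarrow> complex \<Rightarrow> bool" where
  "is_eigenvalue D A l \<longleftrightarrow>
     (\<exists>v. (\<exists>i<D. v i \<noteq> 0) \<and> (\<forall>i<D. apply_op D A v i = l * v i))"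

definition verification_operator ::
  "nat \<Rightarrow> (nat \<Rightarrow> nat \<Rightarrow> complex) \<Rightarrow> (nat \<Rightarrow> complex) \<Rightarrow> bool" where
  "verification_operator D \<Omega> \<Psi> \<longleftrightarrow>
     hermitian D \<Omega> \<and>
     (\<forall>v. 0 \<le> Re (qform D \<Omega> v) \<and> Re (qform D \<Omega> v) \<le> sqnorm D v) \<and>
     (\<forall>i<D. apply_op D \<Omega> \<Psi> i = \<Psi> i) \<and>
     (\<forall>v. (\<forall>i<D. apply_op D \<Omega> v i = v i) \<longrightarrow> (\<exists>c. \<forall>i<D. v i = c * \<Psi> i))"

text \<open>beta is the second largest eigenvalue of Omega (counted with multiplicity);
since the eigenvalue 1 is the largest and nondegenerate, this is the largest
eigenvalue different from 1.\<close>
definition second_largest_eigenvalue ::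
  "nat \<Rightarrow> (nat \<Rightarrow> nat \<Rightarrow> complex) \<Rightarrow> real \<Rightarrow> bool" where
  "second_largest_eigenvalue D \<Omega> \<beta> \<longleftrightarrow>
     is_eigenvalue D \<Omega> (complex_of_real \<beta>) \<and> \<beta> \<noteq> 1 \<and>
     (\<forall>l. is_eigenvalue D \<Omega> (complex_of_real l) \<and> l \<noteq> 1 \<longrightarrow> l \<le> \<beta>)"

definition smallest_eigenvalue ::
  "nat \<Rightarrow> (nat \<Rightarrow> nat \<Rightarrow> complex) \<Rightarrow> real \<Rightarrow> bool" where
  "smallest_eigenvalue D \<Omega> \<tau> \<longleftrightarrow>
     is_eigenvalue D \<Omega> (complex_of_real \<tau>) \<and>
     (\<forall>l. is_eigenvalue D \<Omega> l \<longrightarrow> l \<in> \<real> \<and> \<tau> \<le> Re l)"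

definition density_op :: "nat \<Rightarrow> nat \<Rightarrow> (nat list \<Rightarrow> nat list \<Rightarrow> complex) \<Rightarrow> bool" where
  "density_op D n \<rho> \<longleftrightarrow>
     (\<forall>xs\<in>basis_idx D n. \<forall>ys\<in>basis_idx D n. \<rho> ys xs = cnj (\<rho> xs ys)) \<and>
     (\<forall>v. 0 \<le> Re (\<Sum>xs\<in>basis_idx D n. \<Sum>ys\<in>basis_idx D n. cnj (v xs) * \<rho> xs ys * v ys)) \<and>
     (\<Sum>xs\<in>basis_idx D n. \<rho> xs xs) = 1"

text \<open>Permutation invariance: P_pi rho P_pi^dagger = rho for every permutation pi
of the n tensor factors.\<close>
definition perm_invariant :: "nat \<Rightarrow> nat \<Rightarrow> (nat list \<Rightarrow> nat list \<Rightarrow> complex) \<Rightarrow> bool" where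
  "perm_invariant D n \<rho> \<longleftrightarrow>
     (\<forall>\<pi>. \<pi> permutes {..<n} \<longrightarrow>
        (\<forall>xs\<in>basis_idx D n. \<forall>ys\<in>basis_idx D n.
           \<rho> (map (\<lambda>i. xs ! \<pi> i) [0..<n]) (map (\<lambda>i. ys ! \<pi> i) [0..<n]) = \<rho> xs ys))"

definition tensor_op ::
  "nat \<Rightarrow> (nat \<Rightarrow> nat \<Rightarrow> complex) \<Rightarrow> (nat \<Rightarrow> nat \<Rightarrow> complex) \<Rightarrow> nat list \<Rightarrow> nat list \<Rightarrow> complex" where
  "tensor_op N \<Omega> P xs ys = (\<Prod>i<N. \<Omega> (xs ! i) (ys ! i)) * P (xs ! N) (ys ! N)"

definition trace_prod :: "nat \<Rightarrow> nat \<Rightarrow> (nat list \<Rightarrow> nat list \<Rightarrow> complex) \<Rightarrow>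
    (nat list \<Rightarrow> nat list \<Rightarrow> complex) \<Rightarrow> complex" where
  "trace_prod D n A \<rho> = (\<Sum>xs\<in>basis_idx D n. \<Sum>ys\<in>basis_idx D n. A xs ys * \<rho> ys xs)"

definition identity_op :: "nat \<Rightarrow> nat \<Rightarrow> complex" where
  "identity_op i j = (if i = j then 1 else 0)"

definition proj :: "(nat \<Rightarrow> complex) \<Rightarrow> nat \<Rightarrow> nat \<Rightarrow> complex" where
  "proj \<Psi> i j = \<Psi> i * cnj (\<Psi> j)"

definition p_rho where
  "p_rho D N \<Omega> \<rho> = Re (trace_prod D (N+1) (tensor_op N \<Omega> identity_op) \<rho>)"

definition f_rho where
  "f_rho D N \<Omega> \<Psi> \<rho> = Re (trace_prod D (N+1) (tensor_op N \<Omega> (proj \<Psi>)) \<rho>)"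

text \<open>The set over which eta(N,f,Omega) is the maximum.\<close>
definition eta_set where
  "eta_set D N f \<Omega> \<Psi> = {p_rho D N \<Omega> \<rho> | \<rho>.
      density_op D (N+1) \<rho> \<and> perm_invariant D (N+1) \<rho> \<and> f_rho D N \<Omega> \<Psi> \<rho> \<le> f}"

definition is_max_of :: "real set \<Rightarrow> real \<Rightarrow> bool" where
  "is_max_of S x \<longleftrightarrow> x \<in> S \<and> (\<forall>y\<in>S. y \<le> x)"

end

theory Submission
  imports Defs
begin

definition ip :: "nat \<Rightarrow> (nat \<Rightarrow> complex) \<Rightarrow> (nat \<Rightarrow> complex) \<Rightarrow> complex" where
  "ip D v w = (\<Sum>i<D. cnj (v i) * w i)"

lemma ip_cnj: "cnj (ip D v w) = ip D w v"
  by (simp add: ip_def mult.commute)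

lemma ip_self_real: "ip D v v = of_real (sqnorm D v)"
  by (simp add: ip_def sqnorm_def complex_norm_square mult.commute del: of_real_power)

lemma sqnorm_nonneg: "0 \<le> sqnorm D v"
  by (simp add: sqnorm_def sum_nonneg)

lemma sqnorm_zero: "sqnorm D v = 0 \<Longrightarrow> i < D \<Longrightarrow> v i = 0"
  unfolding sqnorm_def by (subst (asm) sum_nonneg_eq_0_iff) auto

lemma ip_self_zero: "ip D v v = 0 \<Longrightarrow> i < D \<Longrightarrow> v i = 0"
  using sqnorm_zero[of D v i] by (simp add: ip_self_real)

lemma ip_add_right: "ip D y (\<lambda>i. a i + c * b i) = ip D y a + c * ip D y b"
  by (simp add: ip_def sum.distrib sum_distrib_left algebra_simps)

lemma ip_add_left: "ip D (\<lambda>i. a i + c * b i) y = ip D a y + cnj c * ip D b y"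
  by (simp add: ip_def sum.distrib sum_distrib_left algebra_simps)

lemma ip_scale_right: "ip D y (\<lambda>i. c * b i) = c * ip D y b"
  by (simp add: ip_def sum_distrib_left algebra_simps)

lemma ip_scale_left: "ip D (\<lambda>i. c * b i) y = cnj c * ip D b y"
  by (simp add: ip_def sum_distrib_left algebra_simps)

lemma ip_cong: "(\<And>i. i < D \<Longrightarrow> v i = v' i) \<Longrightarrow> (\<And>i. i < D \<Longrightarrow> w i = w' i) \<Longrightarrow> ip D v w = ip D v' w'"
  by (simp add: ip_def)

lemma apply_op_lin: "apply_op D A (\<lambda>i. a i + c * b i) j = apply_op D A a j + c * apply_op D A b j"
  by (simp add: apply_op_def sum.distrib sum_distrib_left algebra_simps)

lemma apply_op_scale: "apply_op D A (\<lambda>i. c * b i) j = c * apply_op D A b j"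
  by (simp add: apply_op_def sum_distrib_left algebra_simps)

lemma apply_op_cong: "(\<And>i. i < D \<Longrightarrow> v i = v' i) \<Longrightarrow> apply_op D A v j = apply_op D A v' j"
  by (simp add: apply_op_def)

lemma herm_ip: assumes "hermitian D A"
  shows "ip D v (apply_op D A w) = ip D (apply_op D A v) w"
proof -
  have "ip D v (apply_op D A w) = (\<Sum>i<D. \<Sum>j<D. cnj (v i) * A i j * w j)"
    by (simp add: ip_def apply_op_def sum_distrib_left mult.assoc)
  also have "\<dots> = (\<Sum>j<D. \<Sum>i<D. cnj (v i) * A i j * w j)"
    by (rule sum.swap)
  also have "\<dots> = ip D (apply_op D A v) w"
  proof -
    have "\<And>i j. i < D \<Longrightarrow> j < D \<Longrightarrow> cnj (A j i) = A i j"
      using assms unfolding hermitian_def by (metis complex_cnj_cnj)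
    then show ?thesis unfolding ip_def apply_op_def
      by (simp add: sum_distrib_left sum_distrib_right mult.commute mult.left_commute)
  qed
  finally show ?thesis .
qed

lemma qform_ip: "qform D A v = ip D v (apply_op D A v)"
  by (simp add: qform_def ip_def apply_op_def sum_distrib_left mult.assoc)

lemma herm_qform_real: assumes "hermitian D A" shows "cnj (ip D v (apply_op D A v)) = ip D v (apply_op D A v)"
  by (simp add: ip_cnj herm_ip[OF assms])

lemma real_lin_quad:
  fixes r C :: real
  assumes "\<And>t. 2 * t * r \<le> t^2 * C"
  shows "r = 0"
proof (rule ccontr)
  assume r: "r \<noteq> 0"
  define t where "t = r / (\<bar>C\<bar> + 1)"
  have pos: "\<bar>C\<bar> + 1 > 0" by simp
  have "2 * t * r \<le> t^2 * C" by (rule assms)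
  hence "2 * r^2 / (\<bar>C\<bar> + 1) \<le> r^2 * C / (\<bar>C\<bar> + 1)^2"
    by (simp add: t_def power2_eq_square field_simps)
  hence "2 * r^2 / (\<bar>C\<bar> + 1) * (\<bar>C\<bar> + 1)^2 \<le> r^2 * C / (\<bar>C\<bar> + 1)^2 * (\<bar>C\<bar> + 1)^2"
    by (rule mult_right_mono) simp
  hence "2 * r^2 * (\<bar>C\<bar> + 1) \<le> r^2 * C"
    using pos by (simp add: power2_eq_square)
  moreover have "r^2 * C \<le> r^2 * \<bar>C\<bar>" by (simp add: mult_left_mono)
  ultimately have "r^2 * (\<bar>C\<bar> + 2) \<le> 0" by (simp add: algebra_simps)
  moreover have "r^2 * (\<bar>C\<bar> + 2) > 0" using r by simp
  ultimately show False by linarith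
qed

lemma coord_cont[continuous_intros]: "continuous_on S (\<lambda>x::nat \<Rightarrow> complex. x i)"
  by (rule continuous_on_subset[OF continuous_on_product_coordinates]) auto

lemma sqnorm_le1: "sqnorm D y = 1 \<Longrightarrow> i < D \<Longrightarrow> cmod (y i) \<le> 1"
proof -
  assume a: "sqnorm D y = 1" "i < D"
  have "(cmod (y i))^2 \<le> sqnorm D y"
    unfolding sqnorm_def using a(2) by (intro member_le_sum) auto
  with a(1) have "(cmod (y i))^2 \<le> 1^2" by simp
  thus ?thesis by (rule power2_le_imp_le) simp
qed

lemma ip_zero_left: "(\<And>i. i < D \<Longrightarrow> x i = 0) \<Longrightarrow> ip D x y = 0"
  by (simp add: ip_def)

lemma exists_nonzero_perp:
  assumes kD: "k < D"
    and orth: "\<forall>a<k. \<forall>b<k. ip D (u a) (u b) = (if a = b then 1 else 0)"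
  shows "\<exists>w. sqnorm D w > 0 \<and> (\<forall>b<k. ip D (u b) w = 0)"
proof -
  define w where "w j = (\<lambda>i. (if i = j then 1 else 0) - (\<Sum>a<k. cnj (u a j) * u a i))" for j
  have wV: "ip D (u b) (w j) = 0" if "j < D" "b < k" for j b
  proof -
    have "ip D (u b) (w j) = (\<Sum>i<D. cnj (u b i) * (if i = j then 1 else 0))
        - (\<Sum>i<D. cnj (u b i) * (\<Sum>a<k. cnj (u a j) * u a i))"
      unfolding ip_def w_def by (simp add: right_diff_distrib sum_subtractf)
    also have "(\<Sum>i<D. cnj (u b i) * (\<Sum>a<k. cnj (u a j) * u a i)) = (\<Sum>i<D. \<Sum>a<k. cnj (u a j) * (cnj (u b i) * u a i))"
      by (simp add: sum_distrib_left mult.left_commute)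
    also have "(\<Sum>i<D. \<Sum>a<k. cnj (u a j) * (cnj (u b i) * u a i)) = (\<Sum>a<k. cnj (u a j) * ip D (u b) (u a))"
      by (subst sum.swap) (simp add: ip_def sum_distrib_left)
    also have "\<dots> = (\<Sum>a<k. if a = b then cnj (u a j) else 0)"
      using orth that by (intro sum.cong) auto
    also have "\<dots> = cnj (u b j)" using that by simp
    also have "(\<Sum>i<D. cnj (u b i) * (if i = j then 1 else 0)) = (\<Sum>i<D. if i = j then cnj (u b i) else 0)"
      by (intro sum.cong) auto
    also have "\<dots> = cnj (u b j)" using that by simp
    finally show ?thesis by simp
  qed
  have "\<exists>j<D. \<exists>i<D. w j i \<noteq> 0"
  proof (rule ccontr)
    assume "\<not> ?thesis"
    hence z: "\<And>j. j < D \<Longrightarrow> w j j = 0" by auto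
    have one: "(\<Sum>a<k. cnj (u a j) * u a j) = 1" if "j < D" for j
      using z[OF that] by (simp add: w_def)
    have "(of_nat D :: complex) = (\<Sum>j<D. \<Sum>a<k. cnj (u a j) * u a j)"
      using one by simp
    also have "\<dots> = (\<Sum>a<k. ip D (u a) (u a))"
      by (subst sum.swap) (simp add: ip_def)
    also have "\<dots> = of_nat k" using orth by simp
    finally have "D = k" by (metis of_nat_eq_iff)
    with kD show False by simp
  qed
  then obtain j i where ji: "j < D" "i < D" "w j i \<noteq> 0" by blast
  have "sqnorm D (w j) \<noteq> 0" using sqnorm_zero[of D "w j" i] ji by auto
  hence "sqnorm D (w j) > 0" using sqnorm_nonneg[of D "w j"] by linarith
  with wV[OF ji(1)] show ?thesis by blast
qed

lemma compact_box: "compact (PiE UNIV (\<lambda>i::nat. if i < D then cball (0::complex) 1 else {0}))"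
proof -
  have "compactin (product_topology (\<lambda>i. euclidean) UNIV) (PiE UNIV (\<lambda>i::nat. if i < D then cball (0::complex) 1 else {0}))"
    by (subst compactin_PiE) auto
  thus ?thesis by (simp add: euclidean_product_topology)
qed

lemma ip_cont[continuous_intros]: "continuous_on S (\<lambda>x. ip D (f x) (g x))"
  if "\<And>i. continuous_on S (\<lambda>x. f x i)" "\<And>i. continuous_on S (\<lambda>x. g x i)"
  unfolding ip_def by (intro continuous_intros that)

lemma apply_op_cont[continuous_intros]: "continuous_on S (\<lambda>x. apply_op D A (f x) i)"
  if "\<And>i. continuous_on S (\<lambda>x. f x i)"
  unfolding apply_op_def by (intro continuous_intros that)

lemma sqnorm_scale: "sqnorm D (\<lambda>i. of_real c * x i) = c^2 * sqnorm D x"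
  by (simp add: sqnorm_def norm_mult power_mult_distrib sum_distrib_left)

lemma exists_eigvec_perp:
  assumes herm: "hermitian D A" and kD: "k < D"
    and orth: "\<forall>a<k. \<forall>b<k. ip D (u a) (u b) = (if a = b then 1 else 0)"
    and eig: "\<forall>a<k. \<forall>i<D. apply_op D A (u a) i = of_real (lam a) * u a i"
  shows "\<exists>v \<mu>. ip D v v = 1 \<and> (\<forall>a<k. ip D (u a) v = 0) \<and> (\<forall>i<D. apply_op D A v i = of_real \<mu> * v i)"
proof -
  define K where "K = PiE UNIV (\<lambda>i::nat. if i < D then cball (0::complex) 1 else {0})"
  define T where "T = {x. ip D x x = 1} \<inter> (\<Inter>a\<in>{..<k}. {x. ip D (u a) x = 0})"
  define S where "S = K \<inter> T"
  define F where "F x = Re (ip D x (apply_op D A x))" for x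
  define tr where "tr c x = (\<lambda>i. if i < D then of_real c * x i else 0)" for c :: real and x :: "nat \<Rightarrow> complex"
  have trK: "tr c x \<in> K" if "sqnorm D (tr c x) = 1" for c x
    unfolding K_def PiE_def using sqnorm_le1[OF that] by (auto simp: tr_def)
  have ip_tr_l: "ip D (tr c x) y = of_real c * ip D x y" for c x y
    by (subst ip_cong[of D "tr c x" "\<lambda>i. of_real c * x i" y y]) (auto simp: tr_def ip_scale_left)
  have ip_tr_r: "ip D y (tr c x) = of_real c * ip D y x" for c x y
    by (subst ip_cong[of D y y "tr c x" "\<lambda>i. of_real c * x i"]) (auto simp: tr_def ip_scale_right)
  have ap_tr: "apply_op D A (tr c x) i = of_real c * apply_op D A x i" for c x i
    by (subst apply_op_cong[of D "tr c x" "\<lambda>i. of_real c * x i"]) (auto simp: tr_def apply_op_scale)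
  have F_tr: "F (tr c x) = c^2 * F x" for c x
  proof -
    have "ip D (tr c x) (apply_op D A (tr c x)) = of_real c * (of_real c * ip D x (apply_op D A x))"
    proof -
      have "apply_op D A (tr c x) = (\<lambda>i. of_real c * apply_op D A x i)" by (rule ext) (rule ap_tr)
      thus ?thesis by (simp add: ip_tr_l ip_scale_right)
    qed
    thus ?thesis by (simp add: F_def power2_eq_square)
  qed
  have "compact K" unfolding K_def by (rule compact_box)
  moreover have "closed T"
    unfolding T_def
    by (intro closed_Int closed_INT ballI closed_Collect_eq continuous_intros)
  ultimately have cS: "compact S" unfolding S_def by auto
  obtain w where w: "sqnorm D w > 0" "\<forall>b<k. ip D (u b) w = 0"
    using exists_nonzero_perp[OF kD orth] by blast
  define c0 where "c0 = 1 / sqrt (sqnorm D w)"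
  have "sqnorm D (tr c0 w) = 1"
  proof -
    have "of_real (sqnorm D (tr c0 w)) = ip D (tr c0 w) (tr c0 w)" by (simp add: ip_self_real)
    also have "\<dots> = of_real c0 * (of_real c0 * ip D w w)" by (simp only: ip_tr_l ip_tr_r)
    also have "\<dots> = of_real (c0^2 * sqnorm D w)" by (simp add: ip_self_real power2_eq_square)
    also have "c0^2 * sqnorm D w = 1" using w(1) by (simp add: c0_def power_divide)
    finally show ?thesis by simp
  qed
  hence "tr c0 w \<in> S" unfolding S_def T_def using trK w(2)
    by (auto simp: ip_self_real ip_tr_r)
  hence Sne: "S \<noteq> {}" by blast
  have "continuous_on S F" unfolding F_def by (intro continuous_intros)
  then obtain v where v: "v \<in> S" and vmax: "\<And>y. y \<in> S \<Longrightarrow> F y \<le> F v"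
    using continuous_attains_sup[OF cS Sne] by blast
  have vv: "ip D v v = 1" and vperp: "\<forall>a<k. ip D (u a) v = 0" using v by (auto simp: S_def T_def)
  have homog: "F x \<le> F v * sqnorm D x" if xp: "\<forall>a<k. ip D (u a) x = 0" for x
  proof (cases "sqnorm D x = 0")
    case True
    hence "ip D x (apply_op D A x) = 0" by (intro ip_zero_left) (rule sqnorm_zero)
    thus ?thesis using True by (simp add: F_def)
  next
    case False
    hence r: "sqnorm D x > 0" using sqnorm_nonneg[of D x] by linarith
    define c where "c = 1 / sqrt (sqnorm D x)"
    have c2: "c^2 * sqnorm D x = 1" using r by (simp add: c_def power_divide)
    have "sqnorm D (tr c x) = 1"
    proof -
      have "of_real (sqnorm D (tr c x)) = ip D (tr c x) (tr c x)" by (simp add: ip_self_real)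
      also have "\<dots> = of_real c * (of_real c * ip D x x)" by (simp only: ip_tr_l ip_tr_r)
    also have "\<dots> = of_real (c^2 * sqnorm D x)" by (simp add: ip_self_real power2_eq_square)
      finally show ?thesis using c2 by simp
    qed
    hence "tr c x \<in> S" unfolding S_def T_def using trK xp
      by (auto simp: ip_self_real ip_tr_r)
    hence "c^2 * F x \<le> F v" using vmax F_tr by metis
    hence "c^2 * F x * sqnorm D x \<le> F v * sqnorm D x" using r by (simp add: mult_right_mono)
    thus ?thesis using c2 by (simp add: algebra_simps)
  qed
  have varRe: "Re (ip D y (apply_op D A v)) = 0" if yp: "\<forall>a<k. ip D (u a) y = 0" and yv: "ip D v y = 0" for y
  proof -
    have yv': "ip D y v = 0" using yv ip_cnj[of D v y] by simp
    define r where "r = Re (ip D y (apply_op D A v))"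
    define C where "C = F v * sqnorm D y - F y"
    have "2 * t * r \<le> t^2 * C" for t
    proof -
      define x where "x = (\<lambda>i. v i + of_real t * y i)"
      have xp: "\<forall>a<k. ip D (u a) x = 0" using yp vperp by (simp add: x_def ip_add_right)
      have "of_real (sqnorm D x) = ip D x x" by (simp add: ip_self_real)
      also have "\<dots> = 1 + of_real t * of_real t * ip D y y"
        unfolding x_def by (simp add: ip_add_left ip_add_right vv yv yv')
      finally have nx: "sqnorm D x = 1 + t * t * sqnorm D y"
        by (simp add: ip_self_real) (metis of_real_eq_iff of_real_add of_real_mult of_real_1)
      have apx: "apply_op D A x = (\<lambda>i. apply_op D A v i + of_real t * apply_op D A y i)"
        unfolding x_def by (rule ext) (rule apply_op_lin)
      have hv: "ip D v (apply_op D A y) = cnj (ip D y (apply_op D A v))"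
        by (simp add: herm_ip[OF herm] ip_cnj)
      have "ip D x (apply_op D A x) = ip D v (apply_op D A v) + of_real t * ip D y (apply_op D A v)
          + of_real t * (cnj (ip D y (apply_op D A v)) + of_real t * ip D y (apply_op D A y))"
        unfolding apx unfolding x_def by (simp add: ip_add_left ip_add_right hv algebra_simps)
      hence "F x = F v + 2 * t * r + t^2 * F y"
        by (simp add: F_def r_def power2_eq_square algebra_simps)
      moreover have "F x \<le> F v * sqnorm D x" by (rule homog[OF xp])
      ultimately have "F v + 2 * t * r + t^2 * F y \<le> F v * (1 + t * t * sqnorm D y)" by (simp add: nx)
      thus ?thesis by (simp add: C_def power2_eq_square algebra_simps)
    qed
    thus ?thesis using real_lin_quad r_def by blast
  qed
  have var: "ip D y (apply_op D A v) = 0" if yp: "\<forall>a<k. ip D (u a) y = 0" and yv: "ip D v y = 0" for y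
  proof -
    have "Re (ip D y (apply_op D A v)) = 0" by (rule varRe[OF yp yv])
    moreover have "Re (ip D (\<lambda>i. \<i> * y i) (apply_op D A v)) = 0"
      by (rule varRe) (use yp yv in \<open>simp_all add: ip_scale_right\<close>)
    hence "Im (ip D y (apply_op D A v)) = 0" by (simp add: ip_scale_left)
    ultimately show ?thesis by (simp add: complex_eq_iff)
  qed
  define c where "c = ip D v (apply_op D A v)"
  define y where "y = (\<lambda>i. apply_op D A v i + (- c) * v i)"
  have yp: "\<forall>a<k. ip D (u a) y = 0"
  proof (intro allI impI)
    fix a assume a: "a < k"
    have "ip D (u a) (apply_op D A v) = ip D (apply_op D A (u a)) v" by (rule herm_ip[OF herm])
    also have "\<dots> = ip D (\<lambda>i. of_real (lam a) * u a i) v"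
      using eig a by (intro ip_cong) auto
    also have "\<dots> = 0" using vperp a by (simp add: ip_scale_left)
    finally have h: "ip D (u a) (apply_op D A v) = 0" .
    have "ip D (u a) y = ip D (u a) (apply_op D A v) + (- c) * ip D (u a) v"
      unfolding y_def by (rule ip_add_right)
    thus "ip D (u a) y = 0" using h vperp a by simp
  qed
  have "ip D v y = ip D v (apply_op D A v) + (- c) * ip D v v"
    unfolding y_def by (rule ip_add_right)
  hence yv: "ip D v y = 0" by (simp add: vv c_def)
  have y1: "ip D y (apply_op D A v) = 0" by (rule var[OF yp yv])
  have y2: "ip D y v = 0" using yv ip_cnj[of D v y] by simp
  have "ip D y y = ip D y (apply_op D A v) + (- c) * ip D y v"
    by (subst (2) y_def) (rule ip_add_right)
  hence "ip D y y = 0" using y1 y2 by simp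
  hence yz: "\<And>i. i < D \<Longrightarrow> y i = 0" by (rule ip_self_zero)
  have creal: "cnj c = c" unfolding c_def by (rule herm_qform_real[OF herm])
  have "Im c = 0" using arg_cong[OF creal, of Im] by simp
  hence cR: "of_real (Re c) = c" by (simp add: complex_eq_iff)
  have "\<forall>i<D. apply_op D A v i = c * v i"
  proof (intro allI impI)
    fix i assume i: "i < D"
    have "apply_op D A v i - c * v i = 0" using yz[OF i] by (simp add: y_def)
    thus "apply_op D A v i = c * v i" by simp
  qed
  hence "\<forall>i<D. apply_op D A v i = of_real (Re c) * v i" by (simp only: cR)
  with vv vperp show ?thesis by blast
qed

lemma ip_sum_left: "ip D (\<lambda>i. \<Sum>a<k. c a * f a i) y = (\<Sum>a<k. cnj (c a) * ip D (f a) y)"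
  unfolding ip_def by (simp add: sum_distrib_left sum_distrib_right sum.swap[of _ "{..<D}"] mult.assoc)

lemma ip_sum_right: "ip D y (\<lambda>i. \<Sum>a<k. c a * f a i) = (\<Sum>a<k. c a * ip D y (f a))"
  unfolding ip_def by (simp add: sum_distrib_left sum.swap[of _ "{..<D}"] mult.left_commute)

lemma spectral_partial:
  assumes herm: "hermitian D A" and psi: "ip D \<Psi> \<Psi> = 1"
    and eigpsi: "\<forall>i<D. apply_op D A \<Psi> i = \<Psi> i"
  shows "1 \<le> k \<Longrightarrow> k \<le> D \<Longrightarrow> \<exists>u lam. u 0 = \<Psi> \<and> lam 0 = 1 \<and>
    (\<forall>a<k. \<forall>b<k. ip D (u a) (u b) = (if a = b then 1 else 0)) \<and>
    (\<forall>a<k. \<forall>i<D. apply_op D A (u a) i = of_real (lam a) * u a i)"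
proof (induction k)
  case 0 thus ?case by simp
next
  case (Suc k)
  show ?case
  proof (cases "k = 0")
    case True
    show ?thesis
      by (rule exI[of _ "\<lambda>_. \<Psi>"], rule exI[of _ "\<lambda>_. 1"]) (use True psi eigpsi in auto)
  next
    case False
    then obtain u lam where IH: "u 0 = \<Psi>" "lam 0 = 1"
      "\<forall>a<k. \<forall>b<k. ip D (u a) (u b) = (if a = b then 1 else 0)"
      "\<forall>a<k. \<forall>i<D. apply_op D A (u a) i = of_real (lam a) * u a i"
      using Suc by auto
    have kD: "k < D" using Suc by simp
    obtain v \<mu> where v: "ip D v v = 1" "\<forall>a<k. ip D (u a) v = 0" "\<forall>i<D. apply_op D A v i = of_real \<mu> * v i"
      using exists_eigvec_perp[OF herm kD IH(3) IH(4)] by blast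
    have v': "\<forall>a<k. ip D v (u a) = 0" using v(2) ip_cnj[of D "u _" v] by (metis complex_cnj_zero)
    show ?thesis
    proof (rule exI[of _ "u(k := v)"], rule exI[of _ "lam(k := \<mu>)"], intro conjI allI impI)
      show "(u(k := v)) 0 = \<Psi>" using False IH by simp
      show "(lam(k := \<mu>)) 0 = 1" using False IH by simp
      fix a b assume a: "a < Suc k" and b: "b < Suc k"
      show "ip D ((u(k := v)) a) ((u(k := v)) b) = (if a = b then 1 else 0)"
        using a b IH(3) v(1,2) v' by (cases "a = k"; cases "b = k") auto
    next
      fix a i assume a: "a < Suc k" and i: "i < D"
      show "apply_op D A ((u(k := v)) a) i = of_real ((lam(k := \<mu>)) a) * (u(k := v)) a i"
        using a i IH(4) v(3) by (cases "a = k") auto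
    qed
  qed
qed

lemma complete_basis:
  assumes orth: "\<forall>a<D. \<forall>b<D. ip D (u a) (u b) = (if a = b then 1 else 0)"
  shows "\<forall>i<D. \<forall>j<D. (\<Sum>a<D. u a i * cnj (u a j)) = (if i = j then 1 else 0)"
proof -
  define p where "p j = (\<lambda>i. \<Sum>a<D. cnj (u a j) * u a i)" for j
  define w where "w j = (\<lambda>i. (if i = j then 1 else 0) + (-1) * p j i)" for j
  define s where "s j = (\<Sum>a<D. (cmod (u a j))^2)" for j
  have wV: "ip D (u b) (w j) = 0" if "j < D" "b < D" for j b
  proof -
    have "ip D (u b) (w j) = ip D (u b) (\<lambda>i. if i = j then 1 else 0) + (-1) * ip D (u b) (p j)"
      unfolding w_def by (rule ip_add_right)
    also have "ip D (u b) (\<lambda>i. if i = j then 1 else 0) = cnj (u b j)"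
    proof -
      have "ip D (u b) (\<lambda>i. if i = j then 1 else 0) = (\<Sum>i<D. if i = j then cnj (u b i) else 0)"
        unfolding ip_def by (intro sum.cong) auto
      thus ?thesis using that by simp
    qed
    also have "ip D (u b) (p j) = (\<Sum>a<D. cnj (u a j) * ip D (u b) (u a))"
      unfolding p_def by (rule ip_sum_right)
    also have "\<dots> = (\<Sum>a<D. if a = b then cnj (u a j) else 0)"
      using orth that by (intro sum.cong) auto
    also have "\<dots> = cnj (u b j)" using that by simp
    finally show ?thesis by simp
  qed
  have ww: "ip D (w j) (w j) = 1 - of_real (s j)" if j: "j < D" for j
  proof -
    have "ip D (w j) (w j) = ip D (\<lambda>i. if i = j then 1 else 0) (w j) + cnj (-1) * ip D (p j) (w j)"
      unfolding w_def[of j] by (rule ip_add_left)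
    also have "ip D (p j) (w j) = (\<Sum>a<D. cnj (cnj (u a j)) * ip D (u a) (w j))"
      unfolding p_def by (rule ip_sum_left)
    also have "\<dots> = 0" using wV j by simp
    also have "ip D (\<lambda>i. if i = j then 1 else 0) (w j) = w j j"
    proof -
      have "ip D (\<lambda>i. if i = j then 1 else 0) (w j) = (\<Sum>i<D. if i = j then w j i else 0)"
        unfolding ip_def by (intro sum.cong) auto
      thus ?thesis using j by simp
    qed
    also have "w j j = 1 - (\<Sum>a<D. cnj (u a j) * u a j)" by (simp add: w_def p_def)
    also have "(\<Sum>a<D. cnj (u a j) * u a j) = of_real (s j)"
      by (simp add: s_def complex_norm_square mult.commute del: of_real_power)
    finally show ?thesis by simp
  qed
  have s_le: "s j \<le> 1" and sn: "sqnorm D (w j) = 1 - s j" if j: "j < D" for j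
  proof -
    have "of_real (sqnorm D (w j)) = (of_real (1 - s j) :: complex)" using ww[OF j] by (simp add: ip_self_real)
    hence e: "sqnorm D (w j) = 1 - s j" by (simp only: of_real_eq_iff)
    thus "sqnorm D (w j) = 1 - s j" .
    show "s j \<le> 1" using e sqnorm_nonneg[of D "w j"] by linarith
  qed
  have "(\<Sum>j<D. s j) = (\<Sum>a<D. sqnorm D (u a))"
    unfolding s_def sqnorm_def by (rule sum.swap)
  also have "\<dots> = (\<Sum>a<D. 1)"
  proof (intro sum.cong refl)
    fix a assume "a \<in> {..<D}"
    hence "ip D (u a) (u a) = 1" using orth by simp
    thus "sqnorm D (u a) = 1" by (simp add: ip_self_real)
  qed
  finally have "(\<Sum>j<D. 1 - s j) = 0" by (simp add: sum_subtractf)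
  hence "\<forall>j\<in>{..<D}. 1 - s j = 0" using s_le by (subst sum_nonneg_eq_0_iff[symmetric]) auto
  hence wz: "w j i = 0" if "j < D" "i < D" for i j
    using sn that sqnorm_zero[of D "w j" i] by auto
  show ?thesis
  proof (intro allI impI)
    fix i j assume i: "i < D" and j: "j < D"
    have "(if i = j then 1 else 0) - p j i = 0" using wz[OF j i] by (simp add: w_def)
    hence "p j i = (if i = j then 1 else 0)" by simp
    thus "(\<Sum>a<D. u a i * cnj (u a j)) = (if i = j then 1 else 0)"
      by (simp add: p_def mult.commute)
  qed
qed

lemma finite_basis_idx[simp]: "finite (basis_idx D n)"
proof -
  have "basis_idx D n = {xs. set xs \<subseteq> {..<D} \<and> length xs = n}" by (auto simp: basis_idx_def)
  thus ?thesis using finite_lists_length_eq[of "{..<D}" n] by simp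
qed

lemma basis_idx_Suc: "basis_idx D (Suc n) = (\<lambda>(i, xs). i # xs) ` ({..<D} \<times> basis_idx D n)"
proof
  show "basis_idx D (Suc n) \<subseteq> (\<lambda>(i, xs). i # xs) ` ({..<D} \<times> basis_idx D n)"
  proof
    fix xs assume "xs \<in> basis_idx D (Suc n)"
    then obtain y ys where "xs = y # ys" "length ys = n" "y < D" "set ys \<subseteq> {..<D}"
      by (cases xs) (auto simp: basis_idx_def)
    thus "xs \<in> (\<lambda>(i, xs). i # xs) ` ({..<D} \<times> basis_idx D n)"
      by (auto simp: basis_idx_def image_iff)
  qed
  show "(\<lambda>(i, xs). i # xs) ` ({..<D} \<times> basis_idx D n) \<subseteq> basis_idx D (Suc n)"
    by (auto simp: basis_idx_def)
qed

lemma prodsum: "(\<Sum>xs\<in>basis_idx D n. \<Prod>k<n. g k (xs ! k)) = (\<Prod>k<n. \<Sum>i<D. (g k i :: complex))"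
proof (induction n arbitrary: g)
  case 0
  have "basis_idx D 0 = {[]}" by (auto simp: basis_idx_def)
  thus ?case by simp
next
  case (Suc n)
  have inj: "inj_on (\<lambda>(i, xs). i # xs) ({..<D} \<times> basis_idx D n)" by (auto simp: inj_on_def)
  have "(\<Sum>xs\<in>basis_idx D (Suc n). \<Prod>k<Suc n. g k (xs ! k))
      = (\<Sum>(i, xs)\<in>{..<D} \<times> basis_idx D n. \<Prod>k<Suc n. g k ((i # xs) ! k))"
    unfolding basis_idx_Suc by (subst sum.reindex[OF inj]) (simp add: case_prod_unfold)
  also have "\<dots> = (\<Sum>i<D. \<Sum>xs\<in>basis_idx D n. g 0 i * (\<Prod>k<n. g (Suc k) (xs ! k)))"
    by (subst sum.cartesian_product[symmetric]) (simp del: prod.lessThan_Suc add: prod.lessThan_Suc_shift)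
  also have "\<dots> = (\<Sum>i<D. g 0 i * (\<Prod>k<n. \<Sum>i<D. g (Suc k) i))"
    by (simp add: sum_distrib_left[symmetric] Suc.IH[of "\<lambda>k. g (Suc k)"])
  also have "\<dots> = (\<Prod>k<Suc n. \<Sum>i<D. g k i)"
    by (simp del: prod.lessThan_Suc add: prod.lessThan_Suc_shift sum_distrib_right)
  finally show ?case .
qed

definition Ut :: "(nat \<Rightarrow> nat \<Rightarrow> complex) \<Rightarrow> nat \<Rightarrow> nat list \<Rightarrow> nat list \<Rightarrow> complex" where
  "Ut u n s xs = (\<Prod>k<n. u (s ! k) (xs ! k))"

definition dval :: "nat \<Rightarrow> (nat \<Rightarrow> nat \<Rightarrow> complex) \<Rightarrow> nat \<Rightarrow> (nat list \<Rightarrow> nat list \<Rightarrow> complex) \<Rightarrow> nat list \<Rightarrow> complex" where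
  "dval D u n \<rho> s = (\<Sum>xs\<in>basis_idx D n. \<Sum>ys\<in>basis_idx D n. cnj (Ut u n s xs) * \<rho> xs ys * Ut u n s ys)"

lemma basis_nth: "xs \<in> basis_idx D n \<Longrightarrow> \<forall>k<n. xs ! k < D"
  unfolding basis_idx_def using nth_mem by fastforce

lemma prod_ind: "(\<Prod>k<(n::nat). if P k then 1 else (0::complex)) = (if \<forall>k<n. P k then 1 else 0)"
  by (induction n) (auto simp: less_Suc_eq)

lemma list_eq_basis: "s \<in> basis_idx D n \<Longrightarrow> t \<in> basis_idx D n \<Longrightarrow> (\<forall>k<n. s ! k = t ! k) \<longleftrightarrow> s = t"
  by (auto simp: basis_idx_def intro: nth_equalityI)

lemma Ut_orth:
  assumes orth: "\<forall>a<D. \<forall>b<D. ip D (u a) (u b) = (if a = b then 1 else 0)"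
    and s: "s \<in> basis_idx D n" and t: "t \<in> basis_idx D n"
  shows "(\<Sum>xs\<in>basis_idx D n. cnj (Ut u n s xs) * Ut u n t xs) = (if s = t then 1 else 0)"
proof -
  have "(\<Sum>xs\<in>basis_idx D n. cnj (Ut u n s xs) * Ut u n t xs)
      = (\<Sum>xs\<in>basis_idx D n. \<Prod>k<n. cnj (u (s ! k) (xs ! k)) * u (t ! k) (xs ! k))"
    by (simp add: Ut_def prod.distrib)
  also have "\<dots> = (\<Prod>k<n. ip D (u (s ! k)) (u (t ! k)))"
    by (subst prodsum) (simp add: ip_def)
  also have "\<dots> = (\<Prod>k<n. if s ! k = t ! k then 1 else 0)"
    using basis_nth[OF s] basis_nth[OF t] orth by (intro prod.cong refl) auto
  also have "\<dots> = (if s = t then 1 else 0)"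
    by (simp add: prod_ind list_eq_basis[OF s t])
  finally show ?thesis .
qed

lemma Ut_complete:
  assumes comp: "\<forall>i<D. \<forall>j<D. (\<Sum>a<D. u a i * cnj (u a j)) = (if i = j then 1 else 0)"
    and xs: "xs \<in> basis_idx D n" and ys: "ys \<in> basis_idx D n"
  shows "(\<Sum>s\<in>basis_idx D n. Ut u n s xs * cnj (Ut u n s ys)) = (if xs = ys then 1 else 0)"
proof -
  have "(\<Sum>s\<in>basis_idx D n. Ut u n s xs * cnj (Ut u n s ys))
      = (\<Sum>s\<in>basis_idx D n. \<Prod>k<n. u (s ! k) (xs ! k) * cnj (u (s ! k) (ys ! k)))"
    by (simp add: Ut_def prod.distrib)
  also have "\<dots> = (\<Prod>k<n. \<Sum>a<D. u a (xs ! k) * cnj (u a (ys ! k)))"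
    by (subst prodsum) simp
  also have "\<dots> = (\<Prod>k<n. if xs ! k = ys ! k then 1 else 0)"
    using basis_nth[OF xs] basis_nth[OF ys] comp by (intro prod.cong refl) auto
  also have "\<dots> = (if xs = ys then 1 else 0)"
    by (simp add: prod_ind list_eq_basis[OF xs ys])
  finally show ?thesis .
qed

lemma tensor_decomp:
  assumes M: "\<forall>k<n. \<forall>i<D. \<forall>j<D. M k i j = (\<Sum>a<D. m k a * u a i * cnj (u a j))"
    and xs: "xs \<in> basis_idx D n" and ys: "ys \<in> basis_idx D n"
  shows "(\<Prod>k<n. M k (xs ! k) (ys ! k)) = (\<Sum>s\<in>basis_idx D n. (\<Prod>k<n. m k (s ! k)) * Ut u n s xs * cnj (Ut u n s ys))"
proof -
  have "(\<Prod>k<n. M k (xs ! k) (ys ! k)) = (\<Prod>k<n. \<Sum>a<D. m k a * u a (xs ! k) * cnj (u a (ys ! k)))"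
    using basis_nth[OF xs] basis_nth[OF ys] M by (intro prod.cong refl) auto
  also have "\<dots> = (\<Sum>s\<in>basis_idx D n. \<Prod>k<n. m k (s ! k) * u (s ! k) (xs ! k) * cnj (u (s ! k) (ys ! k)))"
    by (subst prodsum) simp
  also have "\<dots> = (\<Sum>s\<in>basis_idx D n. (\<Prod>k<n. m k (s ! k)) * Ut u n s xs * cnj (Ut u n s ys))"
    by (simp add: Ut_def prod.distrib)
  finally show ?thesis .
qed

lemma trace_decomp:
  assumes A: "\<forall>xs\<in>basis_idx D n. \<forall>ys\<in>basis_idx D n. A xs ys = (\<Sum>s\<in>basis_idx D n. a s * Ut u n s xs * cnj (Ut u n s ys))"
  shows "trace_prod D n A \<rho> = (\<Sum>s\<in>basis_idx D n. a s * dval D u n \<rho> s)"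
proof -
  let ?B = "basis_idx D n"
  let ?f = "\<lambda>xs ys s. a s * Ut u n s xs * cnj (Ut u n s ys) * \<rho> ys xs"
  have "trace_prod D n A \<rho> = (\<Sum>xs\<in>?B. \<Sum>ys\<in>?B. (\<Sum>s\<in>?B. a s * Ut u n s xs * cnj (Ut u n s ys)) * \<rho> ys xs)"
    unfolding trace_prod_def using A by (intro sum.cong refl) auto
  also have "\<dots> = (\<Sum>xs\<in>?B. \<Sum>ys\<in>?B. \<Sum>s\<in>?B. ?f xs ys s)"
    by (simp only: sum_distrib_right)
  also have "\<dots> = (\<Sum>xs\<in>?B. \<Sum>s\<in>?B. \<Sum>ys\<in>?B. ?f xs ys s)"
    by (rule sum.cong[OF refl], rule sum.swap)
  also have "\<dots> = (\<Sum>s\<in>?B. \<Sum>xs\<in>?B. \<Sum>ys\<in>?B. ?f xs ys s)"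
    by (rule sum.swap)
  also have "\<dots> = (\<Sum>s\<in>?B. a s * dval D u n \<rho> s)"
  proof (intro sum.cong refl)
    fix s
    have "(\<Sum>xs\<in>?B. \<Sum>ys\<in>?B. ?f xs ys s) = (\<Sum>ys\<in>?B. \<Sum>xs\<in>?B. a s * (cnj (Ut u n s ys) * \<rho> ys xs * Ut u n s xs))"
      by (subst sum.swap) (simp only: ac_simps)
    also have "\<dots> = a s * dval D u n \<rho> s"
      by (simp only: dval_def sum_distrib_left)
    finally show "(\<Sum>xs\<in>?B. \<Sum>ys\<in>?B. ?f xs ys s) = a s * dval D u n \<rho> s" .
  qed
  finally show ?thesis .
qed

lemma dval_sum:
  assumes comp: "\<forall>i<D. \<forall>j<D. (\<Sum>a<D. u a i * cnj (u a j)) = (if i = j then 1 else 0)"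
  shows "(\<Sum>s\<in>basis_idx D n. dval D u n \<rho> s) = (\<Sum>xs\<in>basis_idx D n. \<rho> xs xs)"
proof -
  let ?B = "basis_idx D n"
  let ?f = "\<lambda>s xs ys. cnj (Ut u n s xs) * \<rho> xs ys * Ut u n s ys"
  have "(\<Sum>s\<in>?B. dval D u n \<rho> s) = (\<Sum>s\<in>?B. \<Sum>xs\<in>?B. \<Sum>ys\<in>?B. ?f s xs ys)"
    by (simp only: dval_def)
  also have "\<dots> = (\<Sum>xs\<in>?B. \<Sum>s\<in>?B. \<Sum>ys\<in>?B. ?f s xs ys)" by (rule sum.swap)
  also have "\<dots> = (\<Sum>xs\<in>?B. \<Sum>ys\<in>?B. \<Sum>s\<in>?B. ?f s xs ys)" by (rule sum.cong[OF refl], rule sum.swap)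
  also have "\<dots> = (\<Sum>xs\<in>?B. \<Sum>ys\<in>?B. \<rho> xs ys * (\<Sum>s\<in>?B. Ut u n s ys * cnj (Ut u n s xs)))"
    by (simp only: sum_distrib_left ac_simps)
  also have "\<dots> = (\<Sum>xs\<in>?B. \<Sum>ys\<in>?B. if ys = xs then \<rho> xs ys else 0)"
    using Ut_complete[OF comp] by (intro sum.cong refl) auto
  also have "\<dots> = (\<Sum>xs\<in>?B. \<rho> xs xs)" by simp
  finally show ?thesis .
qed

lemma dval_nonneg: "density_op D n \<rho> \<Longrightarrow> 0 \<le> Re (dval D u n \<rho> s)"
  unfolding density_op_def dval_def by blast

definition pl :: "nat \<Rightarrow> (nat \<Rightarrow> nat) \<Rightarrow> nat list \<Rightarrow> nat list" where
  "pl n \<pi> xs = map (\<lambda>i. xs ! \<pi> i) [0..<n]"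

lemma pl_nth[simp]: "k < n \<Longrightarrow> pl n \<pi> xs ! k = xs ! \<pi> k"
  by (simp add: pl_def)

lemma pl_len[simp]: "length (pl n \<pi> xs) = n"
  by (simp add: pl_def)

lemma pl_basis: assumes p: "\<pi> permutes {..<n}" and xs: "xs \<in> basis_idx D n"
  shows "pl n \<pi> xs \<in> basis_idx D n"
proof -
  have "\<forall>i<n. \<pi> i < n" using permutes_in_image[OF p] by auto
  thus ?thesis using xs basis_nth[OF xs] unfolding basis_idx_def pl_def by auto
qed

lemma pl_inv: assumes p: "\<pi> permutes {..<n}" and xs: "xs \<in> basis_idx D n"
  shows "pl n (inv \<pi>) (pl n \<pi> xs) = xs"
proof (rule nth_equalityI)
  show "length (pl n (inv \<pi>) (pl n \<pi> xs)) = length xs" using xs by (simp add: basis_idx_def)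
  fix k assume "k < length (pl n (inv \<pi>) (pl n \<pi> xs))"
  hence k: "k < n" by simp
  have "inv \<pi> k < n" using permutes_in_image[OF permutes_inv[OF p]] k by auto
  thus "pl n (inv \<pi>) (pl n \<pi> xs) ! k = xs ! k" using k by (simp add: permutes_inverses[OF p])
qed

lemma pl_bij: assumes p: "\<pi> permutes {..<n}"
  shows "bij_betw (pl n \<pi>) (basis_idx D n) (basis_idx D n)"
proof (rule bij_betw_byWitness[where f' = "pl n (inv \<pi>)"])
  have pi: "inv \<pi> permutes {..<n}" by (rule permutes_inv[OF p])
  have ii: "inv (inv \<pi>) = \<pi>" using p by (simp add: permutes_inv_inv)
  show "\<forall>a\<in>basis_idx D n. pl n (inv \<pi>) (pl n \<pi> a) = a" using pl_inv[OF p] by blast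
  show "\<forall>a'\<in>basis_idx D n. pl n \<pi> (pl n (inv \<pi>) a') = a'" using pl_inv[OF pi] ii by metis
  show "pl n \<pi> ` basis_idx D n \<subseteq> basis_idx D n" using pl_basis[OF p] by blast
  show "pl n (inv \<pi>) ` basis_idx D n \<subseteq> basis_idx D n" using pl_basis[OF pi] by blast
qed

lemma Ut_pl: assumes p: "\<pi> permutes {..<n}"
  shows "Ut u n (pl n \<pi> s) (pl n \<pi> xs) = Ut u n s xs"
proof -
  have "Ut u n (pl n \<pi> s) (pl n \<pi> xs) = (\<Prod>k<n. u (s ! \<pi> k) (xs ! \<pi> k))"
    unfolding Ut_def by (intro prod.cong refl) simp
  also have "\<dots> = (\<Prod>k<n. u (s ! k) (xs ! k))"
    using prod.permute[OF p, of "\<lambda>k. u (s ! k) (xs ! k)"] by (simp add: comp_def)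
  finally show ?thesis by (simp add: Ut_def)
qed

lemma sum_pl: assumes p: "\<pi> permutes {..<n}"
  shows "(\<Sum>xs\<in>basis_idx D n. g (pl n \<pi> xs)) = (\<Sum>xs\<in>basis_idx D n. g xs)"
  using sum.reindex_bij_betw[OF pl_bij[OF p]] .

lemma dval_pl: assumes p: "\<pi> permutes {..<n}" and inv: "perm_invariant D n \<rho>"
  shows "dval D u n \<rho> (pl n \<pi> s) = dval D u n \<rho> s"
proof -
  have "dval D u n \<rho> (pl n \<pi> s) = (\<Sum>xs\<in>basis_idx D n. \<Sum>ys\<in>basis_idx D n.
      cnj (Ut u n (pl n \<pi> s) (pl n \<pi> xs)) * \<rho> (pl n \<pi> xs) (pl n \<pi> ys) * Ut u n (pl n \<pi> s) (pl n \<pi> ys))"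
  proof -
    let ?F = "\<lambda>xs ys. cnj (Ut u n (pl n \<pi> s) xs) * \<rho> xs ys * Ut u n (pl n \<pi> s) ys"
    have "dval D u n \<rho> (pl n \<pi> s) = (\<Sum>xs\<in>basis_idx D n. \<Sum>ys\<in>basis_idx D n. ?F xs ys)"
      by (simp only: dval_def)
    also have "\<dots> = (\<Sum>xs\<in>basis_idx D n. \<Sum>ys\<in>basis_idx D n. ?F xs (pl n \<pi> ys))"
      by (rule sum.cong[OF refl], rule sum_pl[OF p, symmetric])
    also have "\<dots> = (\<Sum>xs\<in>basis_idx D n. \<Sum>ys\<in>basis_idx D n. ?F (pl n \<pi> xs) (pl n \<pi> ys))"
      by (rule sum_pl[OF p, symmetric])
    finally show ?thesis .
  qed
  also have "\<dots> = dval D u n \<rho> s"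
    unfolding dval_def Ut_pl[OF p]
    using inv p unfolding perm_invariant_def pl_def by (intro sum.cong refl) auto
  finally show ?thesis .
qed

definition phi where "phi D u n w xs = (\<Sum>t\<in>basis_idx D n. w t * Ut u n t xs)"
definition rhow where "rhow D u n w xs ys = phi D u n w xs * cnj (phi D u n w ys)"

lemma ip_phi:
  assumes orth: "\<forall>a<D. \<forall>b<D. ip D (u a) (u b) = (if a = b then 1 else 0)"
    and s: "s \<in> basis_idx D n"
  shows "(\<Sum>xs\<in>basis_idx D n. cnj (Ut u n s xs) * phi D u n w xs) = w s"
proof -
  have "(\<Sum>xs\<in>basis_idx D n. cnj (Ut u n s xs) * phi D u n w xs)
      = (\<Sum>t\<in>basis_idx D n. w t * (\<Sum>xs\<in>basis_idx D n. cnj (Ut u n s xs) * Ut u n t xs))"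
  proof -
    have "(\<Sum>xs\<in>basis_idx D n. cnj (Ut u n s xs) * phi D u n w xs)
       = (\<Sum>xs\<in>basis_idx D n. \<Sum>t\<in>basis_idx D n. w t * (cnj (Ut u n s xs) * Ut u n t xs))"
      unfolding phi_def by (simp only: sum_distrib_left ac_simps)
    also have "\<dots> = (\<Sum>t\<in>basis_idx D n. \<Sum>xs\<in>basis_idx D n. w t * (cnj (Ut u n s xs) * Ut u n t xs))"
      by (rule sum.swap)
    finally show ?thesis by (simp only: sum_distrib_left)
  qed
  also have "\<dots> = (\<Sum>t\<in>basis_idx D n. if t = s then w t else 0)"
    using Ut_orth[OF orth s] by (intro sum.cong refl) auto
  also have "\<dots> = w s" using s by simp
  finally show ?thesis .
qed

lemma dval_rhow:
  assumes orth: "\<forall>a<D. \<forall>b<D. ip D (u a) (u b) = (if a = b then 1 else 0)"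
    and s: "s \<in> basis_idx D n"
  shows "dval D u n (rhow D u n w) s = w s * cnj (w s)"
proof -
  have "dval D u n (rhow D u n w) s = (\<Sum>xs\<in>basis_idx D n. cnj (Ut u n s xs) * phi D u n w xs)
      * (\<Sum>ys\<in>basis_idx D n. cnj (phi D u n w ys) * Ut u n s ys)"
    unfolding dval_def rhow_def sum_product by (simp only: ac_simps)
  also have "(\<Sum>ys\<in>basis_idx D n. cnj (phi D u n w ys) * Ut u n s ys) = cnj (\<Sum>ys\<in>basis_idx D n. cnj (Ut u n s ys) * phi D u n w ys)"
    by (simp add: mult.commute)
  finally show ?thesis by (simp only: ip_phi[OF orth s])
qed

lemma density_rhow:
  assumes orth: "\<forall>a<D. \<forall>b<D. ip D (u a) (u b) = (if a = b then 1 else 0)"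
    and comp: "\<forall>i<D. \<forall>j<D. (\<Sum>a<D. u a i * cnj (u a j)) = (if i = j then 1 else 0)"
    and w1: "(\<Sum>t\<in>basis_idx D n. w t * cnj (w t)) = 1"
  shows "density_op D n (rhow D u n w)"
  unfolding density_op_def
proof (intro conjI ballI allI)
  fix xs ys show "rhow D u n w ys xs = cnj (rhow D u n w xs ys)" by (simp add: rhow_def)
next
  fix v :: "nat list \<Rightarrow> complex"
  define X where "X = (\<Sum>xs\<in>basis_idx D n. cnj (v xs) * phi D u n w xs)"
  have "(\<Sum>xs\<in>basis_idx D n. \<Sum>ys\<in>basis_idx D n. cnj (v xs) * rhow D u n w xs ys * v ys)
     = X * (\<Sum>ys\<in>basis_idx D n. cnj (phi D u n w ys) * v ys)"
    unfolding X_def rhow_def sum_product by (simp only: ac_simps)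
  also have "(\<Sum>ys\<in>basis_idx D n. cnj (phi D u n w ys) * v ys) = cnj X"
    by (simp add: X_def mult.commute)
  also have "X * cnj X = of_real ((cmod X)^2)" by (simp add: complex_norm_square del: of_real_power)
  finally show "0 \<le> Re (\<Sum>xs\<in>basis_idx D n. \<Sum>ys\<in>basis_idx D n. cnj (v xs) * rhow D u n w xs ys * v ys)"
    by simp
next
  have "(\<Sum>xs\<in>basis_idx D n. rhow D u n w xs xs) = (\<Sum>s\<in>basis_idx D n. dval D u n (rhow D u n w) s)"
    by (rule dval_sum[OF comp, symmetric])
  also have "\<dots> = (\<Sum>s\<in>basis_idx D n. w s * cnj (w s))"
    using dval_rhow[OF orth] by (intro sum.cong refl) auto
  finally show "(\<Sum>xs\<in>basis_idx D n. rhow D u n w xs xs) = 1" using w1 by simp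
qed

lemma perm_rhow:
  assumes sym: "\<And>\<pi> t. \<pi> permutes {..<n} \<Longrightarrow> t \<in> basis_idx D n \<Longrightarrow> w (pl n \<pi> t) = w t"
  shows "perm_invariant D n (rhow D u n w)"
proof -
  have ph: "phi D u n w (pl n \<pi> xs) = phi D u n w xs" if p: "\<pi> permutes {..<n}" for \<pi> xs
  proof -
    have "phi D u n w (pl n \<pi> xs) = (\<Sum>t\<in>basis_idx D n. w (pl n \<pi> t) * Ut u n (pl n \<pi> t) (pl n \<pi> xs))"
      unfolding phi_def by (rule sum_pl[OF p, symmetric])
    also have "\<dots> = phi D u n w xs"
      unfolding phi_def Ut_pl[OF p] using sym[OF p] by (intro sum.cong refl) auto
    finally show ?thesis .
  qed
  show ?thesis unfolding perm_invariant_def rhow_def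
    using ph unfolding pl_def by auto
qed

lemma ip_eig_left: "(\<And>i. i < D \<Longrightarrow> apply_op D A x i = of_real l * x i) \<Longrightarrow> ip D (apply_op D A x) y = of_real l * ip D x y"
proof -
  assume h: "\<And>i. i < D \<Longrightarrow> apply_op D A x i = of_real l * x i"
  have "ip D (apply_op D A x) y = ip D (\<lambda>i. of_real l * x i) y" using h by (intro ip_cong) auto
  thus ?thesis by (simp add: ip_scale_left)
qed

lemma ip_eig_right: "(\<And>i. i < D \<Longrightarrow> apply_op D A x i = of_real l * x i) \<Longrightarrow> ip D y (apply_op D A x) = of_real l * ip D y x"
proof -
  assume h: "\<And>i. i < D \<Longrightarrow> apply_op D A x i = of_real l * x i"
  have "ip D y (apply_op D A x) = ip D y (\<lambda>i. of_real l * x i)" using h by (intro ip_cong) auto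
  thus ?thesis by (simp add: ip_scale_right)
qed

lemma expand_basis:
  assumes comp: "\<forall>i<D. \<forall>j<D. (\<Sum>a<D. u a i * cnj (u a j)) = (if i = j then 1 else 0)"
    and i: "i < D"
  shows "v i = (\<Sum>a<D. u a i * ip D (u a) v)"
proof -
  have "(\<Sum>a<D. u a i * ip D (u a) v) = (\<Sum>a<D. \<Sum>j<D. u a i * cnj (u a j) * v j)"
    by (simp add: ip_def sum_distrib_left mult.assoc)
  also have "\<dots> = (\<Sum>j<D. \<Sum>a<D. u a i * cnj (u a j) * v j)" by (rule sum.swap)
  also have "\<dots> = (\<Sum>j<D. (if i = j then 1 else 0) * v j)"
    using comp i by (simp add: sum_distrib_right[symmetric])
  also have "\<dots> = (\<Sum>j<D. if j = i then v j else 0)" by (intro sum.cong) auto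
  also have "\<dots> = v i" using i by simp
  finally show ?thesis by simp
qed

lemma spec_setup:
  fixes D N :: nat and \<Omega> :: "nat \<Rightarrow> nat \<Rightarrow> complex" and \<Psi> :: "nat \<Rightarrow> complex"
    and \<beta> \<tau> :: real
  assumes D2: "D \<ge> 2"
    and nPsi: "sqnorm D \<Psi> = 1"
    and vo: "verification_operator D \<Omega> \<Psi>"
    and sl: "second_largest_eigenvalue D \<Omega> \<beta>"
    and se: "smallest_eigenvalue D \<Omega> \<tau>"
  shows "\<exists>u lam. u 0 = \<Psi> \<and> lam 0 = 1 \<and>
    (\<forall>a<D. \<forall>b<D. ip D (u a) (u b) = (if a = b then 1 else 0)) \<and>
    (\<forall>i<D. \<forall>j<D. (\<Sum>a<D. u a i * cnj (u a j)) = (if i = j then 1 else 0)) \<and>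
    (\<forall>i<D. \<forall>j<D. \<Omega> i j = (\<Sum>a<D. of_real (lam a) * u a i * cnj (u a j))) \<and>
    (\<forall>a<D. 0 \<le> lam a \<and> lam a \<le> 1) \<and>
    (\<forall>a. 0 < a \<and> a < D \<longrightarrow> lam a \<le> \<beta>) \<and>
    (\<exists>b. 0 < b \<and> b < D \<and> lam b = \<beta>) \<and>
    (\<forall>a<D. \<tau> \<le> lam a) \<and>
    (\<exists>z<D. lam z = \<tau>)"
proof -
  have herm: "hermitian D \<Omega>" and psd: "\<And>v. 0 \<le> Re (qform D \<Omega> v) \<and> Re (qform D \<Omega> v) \<le> sqnorm D v"
    and eigpsi: "\<forall>i<D. apply_op D \<Omega> \<Psi> i = \<Psi> i"
    and nondeg: "\<And>v. (\<forall>i<D. apply_op D \<Omega> v i = v i) \<Longrightarrow> (\<exists>c. \<forall>i<D. v i = c * \<Psi> i)"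
    using vo unfolding verification_operator_def by blast+
  have psi1: "ip D \<Psi> \<Psi> = 1" using nPsi by (simp add: ip_self_real)
  obtain u lam where u0: "u 0 = \<Psi>" and lam0: "lam 0 = 1"
    and orth: "\<forall>a<D. \<forall>b<D. ip D (u a) (u b) = (if a = b then 1 else 0)"
    and eig: "\<forall>a<D. \<forall>i<D. apply_op D \<Omega> (u a) i = of_real (lam a) * u a i"
    using spectral_partial[OF herm psi1 eigpsi, of D] D2 by auto
  have comp: "\<forall>i<D. \<forall>j<D. (\<Sum>a<D. u a i * cnj (u a j)) = (if i = j then 1 else 0)"
    by (rule complete_basis[OF orth])
  have decomp: "\<forall>i<D. \<forall>j<D. \<Omega> i j = (\<Sum>a<D. of_real (lam a) * u a i * cnj (u a j))"
  proof (intro allI impI)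
    fix i j assume i: "i < D" and j: "j < D"
    have "(\<Sum>a<D. of_real (lam a) * u a i * cnj (u a j)) = (\<Sum>a<D. apply_op D \<Omega> (u a) i * cnj (u a j))"
      using eig i by (intro sum.cong refl) auto
    also have "\<dots> = (\<Sum>a<D. \<Sum>l<D. \<Omega> i l * (u a l * cnj (u a j)))"
      by (simp add: apply_op_def sum_distrib_right mult.assoc)
    also have "\<dots> = (\<Sum>l<D. \<Sum>a<D. \<Omega> i l * (u a l * cnj (u a j)))" by (rule sum.swap)
    also have "\<dots> = (\<Sum>l<D. \<Omega> i l * (if l = j then 1 else 0))"
      using comp j by (simp add: sum_distrib_left[symmetric])
    also have "\<dots> = (\<Sum>l<D. if l = j then \<Omega> i l else 0)" by (intro sum.cong) auto
  also have "\<dots> = \<Omega> i j" using j by simp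
    finally show "\<Omega> i j = (\<Sum>a<D. of_real (lam a) * u a i * cnj (u a j))" by simp
  qed
  have qf: "Re (qform D \<Omega> (u a)) = lam a" if a: "a < D" for a
  proof -
    have "qform D \<Omega> (u a) = of_real (lam a) * ip D (u a) (u a)"
      unfolding qform_ip using eig a by (intro ip_eig_right) auto
    thus ?thesis using orth a by simp
  qed
  have sn: "sqnorm D (u a) = 1" if a: "a < D" for a
    using orth a by (metis ip_self_real of_real_eq_1_iff)
  have lr: "\<forall>a<D. 0 \<le> lam a \<and> lam a \<le> 1" using psd qf sn by metis
  have nz: "\<exists>i<D. u a i \<noteq> 0" if a: "a < D" for a
  proof (rule ccontr)
    assume "\<not> ?thesis"
    hence "ip D (u a) (u a) = 0" by (intro ip_zero_left) auto
    thus False using orth a by simp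
  qed
  have iseig: "is_eigenvalue D \<Omega> (of_real (lam a))" if a: "a < D" for a
    unfolding is_eigenvalue_def using nz[OF a] eig a by blast
  have ne1: "lam a \<noteq> 1" if a: "0 < a" "a < D" for a
  proof
    assume l1: "lam a = 1"
    then obtain c where c: "\<forall>i<D. u a i = c * \<Psi> i" using nondeg[of "u a"] eig a by auto
    have "ip D (u 0) (u a) = ip D \<Psi> (\<lambda>i. c * \<Psi> i)" using u0 c by (intro ip_cong) auto
    also have "\<dots> = c" using psi1 by (simp add: ip_scale_right)
    finally have "c = 0" using orth a by auto
    hence "ip D (u a) (u a) = 0" using c by (intro ip_zero_left) auto
    thus False using orth a by simp
  qed
  have leb: "\<forall>a. 0 < a \<and> a < D \<longrightarrow> lam a \<le> \<beta>"
    using sl iseig ne1 unfolding second_largest_eigenvalue_def by blast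
  have get: "\<exists>a<D. lam a = \<mu>" if ev: "is_eigenvalue D \<Omega> (of_real \<mu>)" for \<mu>
  proof -
    obtain v i where vi: "i < D" "v i \<noteq> 0" and vev: "\<forall>i<D. apply_op D \<Omega> v i = of_real \<mu> * v i"
      using ev unfolding is_eigenvalue_def by blast
    have "\<exists>a<D. ip D (u a) v \<noteq> 0"
    proof (rule ccontr)
      assume "\<not> ?thesis"
      hence "v i = 0" using expand_basis[OF comp vi(1), of v] by simp
      thus False using vi by simp
    qed
    then obtain a where a: "a < D" "ip D (u a) v \<noteq> 0" by blast
    have "of_real (lam a) * ip D (u a) v = ip D (apply_op D \<Omega> (u a)) v"
      using eig a by (intro ip_eig_left[symmetric]) auto
    also have "\<dots> = ip D (u a) (apply_op D \<Omega> v)" by (rule herm_ip[OF herm, symmetric])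
    also have "\<dots> = of_real \<mu> * ip D (u a) v" using vev by (intro ip_eig_right) auto
    finally have "lam a = \<mu>" using a(2) by simp
    thus ?thesis using a by blast
  qed
  obtain b where b: "b < D" "lam b = \<beta>" using get sl unfolding second_largest_eigenvalue_def by blast
  have "b \<noteq> 0" using b lam0 sl unfolding second_largest_eigenvalue_def by (metis)
  hence bex: "\<exists>b. 0 < b \<and> b < D \<and> lam b = \<beta>" using b by blast
  have tau: "\<forall>a<D. \<tau> \<le> lam a" using se iseig unfolding smallest_eigenvalue_def by fastforce
  have zex: "\<exists>z<D. lam z = \<tau>" using get se unfolding smallest_eigenvalue_def by blast
  show ?thesis using u0 lam0 orth comp decomp lr leb bex tau zex by blast
qed

lemma card_perm_pred:
  assumes p: "\<pi> permutes {..<n}"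
  shows "card {k. k < n \<and> P (\<pi> k)} = card {k. k < n \<and> P k}"
proof (rule bij_betw_same_card[of \<pi>])
  have inj: "inj \<pi>" using p by (rule permutes_inj)
  show "bij_betw \<pi> {k. k < n \<and> P (\<pi> k)} {k. k < n \<and> P k}"
    unfolding bij_betw_def
  proof
    show "inj_on \<pi> {k. k < n \<and> P (\<pi> k)}" using inj by (simp add: inj_on_def inj_def)
    show "\<pi> ` {k. k < n \<and> P (\<pi> k)} = {k. k < n \<and> P k}"
    proof
      show "\<pi> ` {k. k < n \<and> P (\<pi> k)} \<subseteq> {k. k < n \<and> P k}"
        using permutes_in_image[OF p] by auto
      show "{k. k < n \<and> P k} \<subseteq> \<pi> ` {k. k < n \<and> P (\<pi> k)}"
      proof
        fix k assume k: "k \<in> {k. k < n \<and> P k}"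
        have "inv \<pi> k < n" using permutes_in_image[OF permutes_inv[OF p]] k by auto
        moreover have "\<pi> (inv \<pi> k) = k" by (rule permutes_inverses(1)[OF p])
        ultimately show "k \<in> \<pi> ` {k. k < n \<and> P (\<pi> k)}" using k by (metis (mono_tags) imageI mem_Collect_eq)
      qed
    qed
  qed
qed

lemma sum_if_const: "finite A \<Longrightarrow> (\<Sum>k\<in>A. if P k then c else (0::real)) = c * real (card {k\<in>A. P k})"
  by (simp add: sum.inter_filter[symmetric])

lemma comb_bound:
  fixes lam :: "nat \<Rightarrow> real" and dd :: "nat list \<Rightarrow> real" and \<beta> :: real
  assumes lam0: "lam 0 = 1" and lamr: "\<forall>a<D. 0 \<le> lam a \<and> lam a \<le> 1"
    and lamb: "\<forall>a. 0 < a \<and> a < D \<longrightarrow> lam a \<le> \<beta>" and b0: "0 \<le> \<beta>"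
    and ddnn: "\<forall>s\<in>basis_idx D (Suc N). 0 \<le> dd s"
    and dd1: "(\<Sum>s\<in>basis_idx D (Suc N). dd s) = 1"
    and sym: "\<forall>\<pi> s. \<pi> permutes {..<Suc N} \<longrightarrow> s \<in> basis_idx D (Suc N) \<longrightarrow> dd (pl (Suc N) \<pi> s) = dd s"
    and f0: "(\<Sum>s\<in>basis_idx D (Suc N). (if s ! N = 0 then (\<Prod>k<N. lam (s ! k)) else 0) * dd s) \<le> 0"
  shows "(\<Sum>s\<in>basis_idx D (Suc N). (\<Prod>k<N. lam (s ! k)) * dd s) \<le> max (\<beta>^N) (1 / real (N+1))
     \<and> ((\<forall>a<D. lam a \<noteq> 0) \<longrightarrow> (\<Sum>s\<in>basis_idx D (Suc N). (\<Prod>k<N. lam (s ! k)) * dd s) \<le> \<beta>^N)"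
proof -
  define n where "n = Suc N"
  define B where "B = basis_idx D n"
  define L where "L s = (\<Prod>k<N. lam (s ! k))" for s
  define Zs where "Zs s = {k. k < n \<and> lam (s ! k) = 0}" for s
  define B1 where "B1 = {s. card (Zs s) = 1}"
  define C where "C = {s. Zs s = {} \<and> (\<forall>k<N. s ! k \<noteq> 0)}"
  define BN where "BN = {s. s \<in> B1 \<and> lam (s ! N) = 0}"
  have finB: "finite B" by (simp add: B_def)
  have ddnn': "\<And>s. s \<in> B \<Longrightarrow> 0 \<le> dd s" using ddnn by (simp add: B_def n_def)
  have nth: "\<And>s k. s \<in> B \<Longrightarrow> k < n \<Longrightarrow> s ! k < D" using basis_nth by (auto simp: B_def)
  have Lr: "0 \<le> L s \<and> L s \<le> 1" if s: "s \<in> B" for s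
  proof -
    have "\<forall>k<N. 0 \<le> lam (s ! k) \<and> lam (s ! k) \<le> 1" using lamr nth[OF s] by (auto simp: n_def)
    thus ?thesis unfolding L_def by (auto intro: prod_nonneg prod_le_1)
  qed
  have fz: "(if s ! N = 0 then L s else 0) * dd s = 0" if s: "s \<in> B" for s
  proof -
    have nn: "\<forall>s\<in>B. 0 \<le> (if s ! N = 0 then L s else 0) * dd s" using Lr ddnn' by auto
    have "(\<Sum>s\<in>B. (if s ! N = 0 then L s else 0) * dd s) \<le> 0" using f0 unfolding B_def n_def L_def .
    hence "(\<Sum>s\<in>B. (if s ! N = 0 then L s else 0) * dd s) = 0" using sum_nonneg[of B "\<lambda>s. (if s ! N = 0 then L s else 0) * dd s"] nn by fastforce
    thus ?thesis using sum_nonneg_eq_0_iff[OF finB, of "\<lambda>s. (if s ! N = 0 then L s else 0) * dd s"] nn s by blast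
  qed
  have termb: "L s * dd s \<le> \<beta>^N * (if s \<in> C then dd s else 0) + (if s \<in> BN then dd s else 0)" if s: "s \<in> B" for s
  proof -
    have rhs: "0 \<le> \<beta>^N * (if s \<in> C then dd s else 0) + (if s \<in> BN then dd s else 0)"
      using ddnn'[OF s] b0 by auto
    show ?thesis
    proof (cases "\<exists>k<N. lam (s ! k) = 0")
      case True
      hence "L s = 0" unfolding L_def by (auto intro: prod_zero)
      thus ?thesis using rhs by simp
    next
      case nA: False
      show ?thesis
      proof (cases "lam (s ! N) = 0")
        case True
        have "Zs s = {N}" using nA True by (auto simp: Zs_def n_def less_Suc_eq)
        hence "s \<in> BN" using True by (simp add: BN_def B1_def)
        moreover have "L s * dd s \<le> dd s" using Lr[OF s] ddnn'[OF s] by (simp add: mult_left_le_one_le)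
        moreover have "0 \<le> \<beta>^N * (if s \<in> C then dd s else 0)" using ddnn'[OF s] b0 by simp
        ultimately show ?thesis by simp
      next
        case nN: False
        have allnz: "\<forall>k<n. lam (s ! k) \<noteq> 0" using nA nN by (auto simp: n_def less_Suc_eq)
        hence Z0: "Zs s = {}" by (auto simp: Zs_def)
        show ?thesis
        proof (cases "s ! N = 0")
          case True
          hence h: "L s * dd s = 0" using fz[OF s] by simp
          show ?thesis by (subst h) (rule rhs)
        next
          case sN: False
          show ?thesis
          proof (cases "\<exists>j<N. s ! j = 0")
            case True
            then obtain j where j: "j < N" "s ! j = 0" by blast
            define \<pi> where "\<pi> = Transposition.transpose j N"
            have p: "\<pi> permutes {..<n}" unfolding \<pi>_def using j by (intro permutes_swap_id) (auto simp: n_def)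
            define s' where "s' = pl n \<pi> s"
            have s'B: "s' \<in> B" using pl_basis[OF p] s by (simp add: s'_def B_def)
            have s'N: "s' ! N = 0" using j by (simp add: s'_def \<pi>_def n_def)
            have "L s' > 0" unfolding L_def
            proof (rule prod_pos)
              fix k assume k: "k \<in> {..<N}"
              have pk: "\<pi> k < n" using permutes_in_image[OF p] k by (auto simp: n_def)
              have "s' ! k = s ! \<pi> k" using k by (simp add: s'_def n_def)
              moreover have "lam (s ! \<pi> k) \<noteq> 0" using allnz pk by blast
              moreover have "0 \<le> lam (s ! \<pi> k)" using lamr nth[OF s pk] by blast
              ultimately show "0 < lam (s' ! k)" by simp
            qed
            hence "dd s' = 0" using fz[OF s'B] s'N by simp
            moreover have "dd s' = dd s" using sym p s by (simp add: s'_def B_def n_def)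
            ultimately have "dd s = 0" by simp
            thus ?thesis using rhs by simp
          next
            case False
            hence sC: "s \<in> C" using Z0 by (simp add: C_def)
            have "L s \<le> (\<Prod>k<N. \<beta>)" unfolding L_def
            proof (rule prod_mono)
              fix k assume k: "k \<in> {..<N}"
              have kn: "k < n" using k by (simp add: n_def)
              have "s ! k \<noteq> 0" using False k by auto
              thus "0 \<le> lam (s ! k) \<and> lam (s ! k) \<le> \<beta>"
                using lamr lamb nth[OF s kn] by auto
            qed
            hence "L s \<le> \<beta>^N" by simp
            hence "L s * dd s \<le> \<beta>^N * dd s" using ddnn'[OF s] by (rule mult_right_mono)
            moreover have "0 \<le> (if s \<in> BN then dd s else 0)" using ddnn'[OF s] by simp
            ultimately show ?thesis using sC by simp
          qed
        qed
      qed
    qed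
  qed
  define X where "X = (\<Sum>s\<in>B. if s \<in> C then dd s else 0)"
  define Y where "Y = (\<Sum>s\<in>B. if s \<in> B1 then dd s else 0)"
  define YN where "YN = (\<Sum>s\<in>B. if s \<in> BN then dd s else 0)"
  have main: "(\<Sum>s\<in>B. L s * dd s) \<le> \<beta>^N * X + YN"
  proof -
    have "(\<Sum>s\<in>B. L s * dd s) \<le> (\<Sum>s\<in>B. \<beta>^N * (if s \<in> C then dd s else 0) + (if s \<in> BN then dd s else 0))"
      using termb by (rule sum_mono)
    also have "\<dots> = \<beta>^N * X + YN" by (simp add: X_def YN_def sum.distrib sum_distrib_left)
    finally show ?thesis .
  qed
  have shift: "(\<Sum>s\<in>B. if s \<in> B1 \<and> lam (s ! k) = 0 then dd s else 0) = YN" if k: "k < n" for k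
  proof -
    define \<pi> where "\<pi> = Transposition.transpose k N"
    have p: "\<pi> permutes {..<n}" unfolding \<pi>_def using k by (intro permutes_swap_id) (auto simp: n_def)
    define g where "g s = (if s \<in> B1 \<and> lam (s ! N) = 0 then dd s else 0)" for s
    have "YN = (\<Sum>s\<in>B. g s)" by (simp add: YN_def g_def BN_def)
    also have "\<dots> = (\<Sum>s\<in>B. g (pl n \<pi> s))" unfolding B_def by (rule sum_pl[OF p, symmetric])
    also have "\<dots> = (\<Sum>s\<in>B. if s \<in> B1 \<and> lam (s ! k) = 0 then dd s else 0)"
    proof (intro sum.cong refl)
      fix s assume s: "s \<in> B"
      have "Zs (pl n \<pi> s) = {j. j < n \<and> lam (s ! \<pi> j) = 0}" by (auto simp: Zs_def)
      hence "card (Zs (pl n \<pi> s)) = card (Zs s)" using card_perm_pred[OF p, of "\<lambda>j. lam (s ! j) = 0"]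
        by (simp add: Zs_def)
      hence "pl n \<pi> s \<in> B1 \<longleftrightarrow> s \<in> B1" by (simp add: B1_def)
      moreover have "pl n \<pi> s ! N = s ! k" by (simp add: \<pi>_def n_def)
      moreover have "dd (pl n \<pi> s) = dd s" using sym p s by (simp add: B_def n_def)
      ultimately show "g (pl n \<pi> s) = (if s \<in> B1 \<and> lam (s ! k) = 0 then dd s else 0)"
        by (simp add: g_def)
    qed
    finally show ?thesis by simp
  qed
  have "real n * YN = (\<Sum>k<n. YN)" by simp
  also have "\<dots> = (\<Sum>k<n. \<Sum>s\<in>B. if s \<in> B1 \<and> lam (s ! k) = 0 then dd s else 0)"
    using shift by simp
  also have "\<dots> = (\<Sum>s\<in>B. \<Sum>k<n. if s \<in> B1 \<and> lam (s ! k) = 0 then dd s else 0)"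
    by (rule sum.swap)
  also have "\<dots> = Y" unfolding Y_def
  proof (intro sum.cong refl)
    fix s assume s: "s \<in> B"
    show "(\<Sum>k<n. if s \<in> B1 \<and> lam (s ! k) = 0 then dd s else 0) = (if s \<in> B1 then dd s else 0)"
    proof (cases "s \<in> B1")
      case True
      have "(\<Sum>k<n. if s \<in> B1 \<and> lam (s ! k) = 0 then dd s else 0) = dd s * real (card {k\<in>{..<n}. lam (s ! k) = 0})"
        using True by (simp add: sum_if_const)
      also have "{k\<in>{..<n}. lam (s ! k) = 0} = Zs s" by (auto simp: Zs_def)
      finally show ?thesis using True by (simp add: B1_def)
    qed simp
  qed
  finally have YNY: "real n * YN = Y" .
  have XY: "X + Y \<le> 1"
  proof -
    have "X + Y = (\<Sum>s\<in>B. (if s \<in> C then dd s else 0) + (if s \<in> B1 then dd s else 0))"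
      by (simp add: X_def Y_def sum.distrib)
    also have "\<dots> \<le> (\<Sum>s\<in>B. dd s)"
    proof (rule sum_mono)
      fix s assume s: "s \<in> B"
      have "\<not> (s \<in> C \<and> s \<in> B1)" by (auto simp: C_def B1_def)
      thus "(if s \<in> C then dd s else 0) + (if s \<in> B1 then dd s else 0) \<le> dd s" using ddnn'[OF s] by auto
    qed
    also have "\<dots> = 1" using dd1 by (simp add: B_def n_def)
    finally show ?thesis .
  qed
  have X0: "0 \<le> X" unfolding X_def using ddnn' by (intro sum_nonneg) auto
  have Y0: "0 \<le> Y" unfolding Y_def using ddnn' by (intro sum_nonneg) auto
  have YN': "YN = Y / real (N + 1)" using YNY by (simp add: n_def field_simps)
  have bN: "0 \<le> \<beta>^N" using b0 by simp
  define M where "M = max (\<beta>^N) (1 / real (N+1))"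
  have "\<beta>^N * X + YN \<le> M * X + M * Y"
  proof -
    have "\<beta>^N * X \<le> M * X" using X0 by (intro mult_right_mono) (auto simp: M_def)
    moreover have "YN \<le> M * Y" unfolding YN' using Y0
      by (simp add: M_def divide_inverse mult.commute mult_left_mono)
    ultimately show ?thesis by simp
  qed
  also have "\<dots> = M * (X + Y)" by (simp add: algebra_simps)
  also have "\<dots> \<le> M * 1" using XY by (intro mult_left_mono) (auto simp: M_def le_max_iff_disj)
  finally have r1: "(\<Sum>s\<in>B. L s * dd s) \<le> M" using main by simp
  have r2: "(\<Sum>s\<in>B. L s * dd s) \<le> \<beta>^N" if nz: "\<forall>a<D. lam a \<noteq> 0"
  proof -
    have "Y = 0" unfolding Y_def
    proof (intro sum.neutral ballI)
      fix s assume s: "s \<in> B"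
      have "Zs s = {}" using nz nth[OF s] by (auto simp: Zs_def)
      thus "(if s \<in> B1 then dd s else 0) = 0" by (simp add: B1_def)
    qed
    hence "YN = 0" using YN' by simp
    hence "(\<Sum>s\<in>B. L s * dd s) \<le> \<beta>^N * X" using main by simp
    also have "\<dots> \<le> \<beta>^N * 1" using XY Y0 \<open>Y = 0\<close> bN by (intro mult_left_mono) auto
    finally show ?thesis by simp
  qed
  show ?thesis using r1 r2 by (simp add: M_def B_def L_def n_def)
qed

lemma tensor_trace:
  assumes Om: "\<forall>i<D. \<forall>j<D. \<Omega> i j = (\<Sum>a<D. of_real (lam a) * u a i * cnj (u a j))"
    and Pd: "\<forall>i<D. \<forall>j<D. P i j = (\<Sum>a<D. pw a * u a i * cnj (u a j))"
  shows "trace_prod D (Suc N) (tensor_op N \<Omega> P) \<rho> =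
    (\<Sum>s\<in>basis_idx D (Suc N). (of_real (\<Prod>k<N. lam (s ! k)) * pw (s ! N)) * dval D u (Suc N) \<rho> s)"
proof (rule trace_decomp, intro ballI)
  fix xs ys assume xs: "xs \<in> basis_idx D (Suc N)" and ys: "ys \<in> basis_idx D (Suc N)"
  define M where "M k = (if k < N then \<Omega> else P)" for k
  define m where "m k a = (if k < N then of_real (lam a) else pw a)" for k a
  have Md: "\<forall>k<Suc N. \<forall>i<D. \<forall>j<D. M k i j = (\<Sum>a<D. m k a * u a i * cnj (u a j))"
    using Om Pd by (auto simp: M_def m_def)
  have "tensor_op N \<Omega> P xs ys = (\<Prod>k<Suc N. M k (xs ! k) (ys ! k))"
    by (simp add: tensor_op_def M_def)
  also have "\<dots> = (\<Sum>s\<in>basis_idx D (Suc N). (\<Prod>k<Suc N. m k (s ! k)) * Ut u (Suc N) s xs * cnj (Ut u (Suc N) s ys))"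
    by (rule tensor_decomp[OF Md xs ys])
  also have "\<dots> = (\<Sum>s\<in>basis_idx D (Suc N). (of_real (\<Prod>k<N. lam (s ! k)) * pw (s ! N)) * Ut u (Suc N) s xs * cnj (Ut u (Suc N) s ys))"
    by (intro sum.cong refl) (simp add: m_def)
  finally show "tensor_op N \<Omega> P xs ys = (\<Sum>s\<in>basis_idx D (Suc N). (of_real (\<Prod>k<N. lam (s ! k)) * pw (s ! N)) * Ut u (Suc N) s xs * cnj (Ut u (Suc N) s ys))" .
qed

lemma p_formula:
  assumes Om: "\<forall>i<D. \<forall>j<D. \<Omega> i j = (\<Sum>a<D. of_real (lam a) * u a i * cnj (u a j))"
    and comp: "\<forall>i<D. \<forall>j<D. (\<Sum>a<D. u a i * cnj (u a j)) = (if i = j then 1 else 0)"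
  shows "p_rho D N \<Omega> \<rho> = (\<Sum>s\<in>basis_idx D (Suc N). (\<Prod>k<N. lam (s ! k)) * Re (dval D u (Suc N) \<rho> s))"
proof -
  have Pd: "\<forall>i<D. \<forall>j<D. identity_op i j = (\<Sum>a<D. 1 * u a i * cnj (u a j))"
    using comp by (simp add: identity_op_def)
  show ?thesis unfolding p_rho_def Suc_eq_plus1[symmetric] tensor_trace[OF Om Pd]
    by (simp add: Re_sum del: of_real_prod)
qed

lemma f_formula:
  assumes Om: "\<forall>i<D. \<forall>j<D. \<Omega> i j = (\<Sum>a<D. of_real (lam a) * u a i * cnj (u a j))"
    and u0: "u 0 = \<Psi>" and D0: "0 < D"
  shows "f_rho D N \<Omega> \<Psi> \<rho> = (\<Sum>s\<in>basis_idx D (Suc N). (if s ! N = 0 then (\<Prod>k<N. lam (s ! k)) else 0) * Re (dval D u (Suc N) \<rho> s))"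
proof -
  have Pd: "\<forall>i<D. \<forall>j<D. proj \<Psi> i j = (\<Sum>a<D. (if a = 0 then 1 else 0) * u a i * cnj (u a j))"
  proof (intro allI impI)
    fix i j assume "i < D" "j < D"
    have "(\<Sum>a<D. (if a = 0 then 1 else 0) * u a i * cnj (u a j)) = (\<Sum>a<D. if a = 0 then u a i * cnj (u a j) else 0)"
      by (intro sum.cong) auto
    also have "\<dots> = \<Psi> i * cnj (\<Psi> j)" using u0 D0 by simp
    finally show "proj \<Psi> i j = (\<Sum>a<D. (if a = 0 then 1 else 0) * u a i * cnj (u a j))" by (simp add: proj_def)
  qed
  show ?thesis unfolding f_rho_def Suc_eq_plus1[symmetric] tensor_trace[OF Om Pd]
    by (auto simp: Re_sum if_distrib intro!: sum.cong simp del: of_real_prod)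
qed

lemma ach_beta:
  fixes N :: nat and b D :: nat and u :: "nat \<Rightarrow> nat \<Rightarrow> complex"
  assumes orth: "\<forall>a<D. \<forall>b<D. ip D (u a) (u b) = (if a = b then 1 else 0)"
    and comp: "\<forall>i<D. \<forall>j<D. (\<Sum>a<D. u a i * cnj (u a j)) = (if i = j then 1 else 0)"
    and b: "b < D" "b \<noteq> 0"
  defines "r \<equiv> replicate (Suc N) b"
  defines "w \<equiv> (\<lambda>t. if t = r then (1::complex) else 0)"
  shows "density_op D (Suc N) (rhow D u (Suc N) w)"
    and "perm_invariant D (Suc N) (rhow D u (Suc N) w)"
    and "\<And>s. s \<in> basis_idx D (Suc N) \<Longrightarrow> Re (dval D u (Suc N) (rhow D u (Suc N) w) s) = (if s = r then 1 else 0)"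
    and "r \<in> basis_idx D (Suc N)" "r ! N = b" "\<And>k. k < N \<Longrightarrow> r ! k = b"
proof -
  show rB: "r \<in> basis_idx D (Suc N)" using b by (auto simp: r_def basis_idx_def)
  show "r ! N = b" unfolding r_def by (rule nth_replicate) simp
  show "\<And>k. k < N \<Longrightarrow> r ! k = b" unfolding r_def by (rule nth_replicate) simp
  have "(\<Sum>t\<in>basis_idx D (Suc N). w t * cnj (w t)) = (\<Sum>t\<in>basis_idx D (Suc N). if t = r then 1 else 0)"
    by (intro sum.cong) (auto simp: w_def)
  also have "\<dots> = 1" using rB by simp
  finally show "density_op D (Suc N) (rhow D u (Suc N) w)" by (rule density_rhow[OF orth comp])
  show "perm_invariant D (Suc N) (rhow D u (Suc N) w)"
  proof (rule perm_rhow)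
    fix \<pi> t assume p: "\<pi> permutes {..<Suc N}" and t: "t \<in> basis_idx D (Suc N)"
    have fwd: "pl (Suc N) \<sigma> r = r" if p': "\<sigma> permutes {..<Suc N}" for \<sigma>
    proof (rule nth_equalityI)
      show "length (pl (Suc N) \<sigma> r) = length r" by (simp add: r_def)
      fix k assume "k < length (pl (Suc N) \<sigma> r)"
      hence k: "k < Suc N" by simp
      have "\<sigma> k < Suc N" using permutes_in_image[OF p'] k by auto
      thus "pl (Suc N) \<sigma> r ! k = r ! k" using k unfolding r_def by (simp del: replicate_Suc)
    qed
    have "pl (Suc N) \<pi> t = r \<longleftrightarrow> t = r"
    proof
      assume h: "pl (Suc N) \<pi> t = r"
      have "t = pl (Suc N) (inv \<pi>) (pl (Suc N) \<pi> t)" using pl_inv[OF p t] by simp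
      also have "\<dots> = r" using h fwd[OF permutes_inv[OF p]] by simp
      finally show "t = r" .
    qed (use fwd[OF p] in simp)
    thus "w (pl (Suc N) \<pi> t) = w t" by (simp add: w_def)
  qed
  fix s assume s: "s \<in> basis_idx D (Suc N)"
  show "Re (dval D u (Suc N) (rhow D u (Suc N) w) s) = (if s = r then 1 else 0)"
    using dval_rhow[OF orth s] by (simp add: w_def)
qed

lemma ach_W:
  fixes N :: nat and z D :: nat and u :: "nat \<Rightarrow> nat \<Rightarrow> complex"
  assumes orth: "\<forall>a<D. \<forall>b<D. ip D (u a) (u b) = (if a = b then 1 else 0)"
    and comp: "\<forall>i<D. \<forall>j<D. (\<Sum>a<D. u a i * cnj (u a j)) = (if i = j then 1 else 0)"
    and z: "z < D" "z \<noteq> 0"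
  defines "e \<equiv> (\<lambda>k. (replicate (Suc N) (0::nat))[k := z])"
  defines "E \<equiv> e ` {..<Suc N}"
  defines "w \<equiv> (\<lambda>t. if t \<in> E then complex_of_real (1 / sqrt (real (Suc N))) else 0)"
  shows "density_op D (Suc N) (rhow D u (Suc N) w)"
    and "perm_invariant D (Suc N) (rhow D u (Suc N) w)"
    and "\<And>s. s \<in> basis_idx D (Suc N) \<Longrightarrow> Re (dval D u (Suc N) (rhow D u (Suc N) w) s) = (if s \<in> E then 1 / real (Suc N) else 0)"
    and "E \<subseteq> basis_idx D (Suc N)" "inj_on e {..<Suc N}"
    and "\<And>k j. j < Suc N \<Longrightarrow> e k ! j = (if j = k then z else 0)"
proof -
  let ?n = "Suc N"
  show enth: "\<And>k j. j < ?n \<Longrightarrow> e k ! j = (if j = k then z else 0)"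
    unfolding e_def by (simp add: nth_list_update del: replicate_Suc)
  have elen: "length (e k) = ?n" for k unfolding e_def by (simp del: replicate_Suc)
  show EB: "E \<subseteq> basis_idx D ?n"
  proof
    fix t assume "t \<in> E"
    then obtain k where t: "t = e k" by (auto simp: E_def)
    have "set t \<subseteq> {..<D}"
    proof
      fix x assume "x \<in> set t"
      then obtain j where "j < length t" "t ! j = x" by (auto simp: in_set_conv_nth)
      thus "x \<in> {..<D}" using enth[of j k] z elen[of k] t by (auto split: if_splits)
    qed
    thus "t \<in> basis_idx D ?n" using elen t by (simp add: basis_idx_def)
  qed
  show inj: "inj_on e {..<?n}"
  proof (rule inj_onI)
    fix k k' assume k: "k \<in> {..<?n}" and k': "k' \<in> {..<?n}" and eq: "e k = e k'"
    have "e k ! k = z" using enth[of k k] k by simp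
    moreover have "e k' ! k = (if k = k' then z else 0)" using enth[of k k'] k by simp
    ultimately show "k = k'" using eq z by (auto split: if_splits)
  qed
  have cardE: "card E = ?n" unfolding E_def using card_image[OF inj] by simp
  have "(\<Sum>t\<in>basis_idx D ?n. w t * cnj (w t)) = (\<Sum>t\<in>basis_idx D ?n. if t \<in> E then complex_of_real (1 / real ?n) else 0)"
  proof (intro sum.cong refl)
    fix t
    have "complex_of_real (1 / sqrt (real ?n)) * cnj (complex_of_real (1 / sqrt (real ?n))) = complex_of_real (1 / real ?n)"
      by (simp flip: of_real_mult add: real_sqrt_mult[symmetric])
    thus "w t * cnj (w t) = (if t \<in> E then complex_of_real (1 / real ?n) else 0)" by (simp add: w_def)
  qed
  also have "\<dots> = (\<Sum>t\<in>basis_idx D ?n \<inter> E. complex_of_real (1 / real ?n))"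
    by (rule sum.inter_restrict[symmetric]) simp
  also have "\<dots> = (\<Sum>t\<in>E. complex_of_real (1 / real ?n))"
  proof -
    have "basis_idx D ?n \<inter> E = E" using EB by blast
    thus ?thesis by simp
  qed
  also have "\<dots> = complex_of_real (real (card E) * (1 / real ?n))" by simp
  also have "\<dots> = 1" using cardE by simp
  finally show "density_op D ?n (rhow D u ?n w)" by (rule density_rhow[OF orth comp])
  have ple: "pl ?n \<sigma> (e k) = e (inv \<sigma> k)" if p: "\<sigma> permutes {..<?n}" and k: "k < ?n" for \<sigma> k
  proof (rule nth_equalityI)
    show "length (pl ?n \<sigma> (e k)) = length (e (inv \<sigma> k))" by (simp add: elen)
    fix j assume "j < length (pl ?n \<sigma> (e k))"
    hence j: "j < ?n" by simp
    have sj: "\<sigma> j < ?n" using permutes_in_image[OF p] j by auto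
    have "\<sigma> j = k \<longleftrightarrow> j = inv \<sigma> k" using permutes_inverses[OF p] by metis
    thus "pl ?n \<sigma> (e k) ! j = e (inv \<sigma> k) ! j" using j sj enth by simp
  qed
  have fwd: "pl ?n \<sigma> t \<in> E" if p: "\<sigma> permutes {..<?n}" and t: "t \<in> E" for \<sigma> t
  proof -
    obtain k where k: "k < ?n" "t = e k" using t by (auto simp: E_def)
    have "inv \<sigma> k < ?n" using permutes_in_image[OF permutes_inv[OF p]] k by auto
    thus ?thesis using ple[OF p k(1)] k by (auto simp: E_def)
  qed
  show "perm_invariant D ?n (rhow D u ?n w)"
  proof (rule perm_rhow)
    fix \<pi> t assume p: "\<pi> permutes {..<?n}" and t: "t \<in> basis_idx D ?n"
    have "pl ?n \<pi> t \<in> E \<longleftrightarrow> t \<in> E"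
    proof
      assume h: "pl ?n \<pi> t \<in> E"
      have "t = pl ?n (inv \<pi>) (pl ?n \<pi> t)" using pl_inv[OF p t] by simp
      thus "t \<in> E" using fwd[OF permutes_inv[OF p] h] by simp
    qed (rule fwd[OF p])
    thus "w (pl ?n \<pi> t) = w t" by (simp add: w_def)
  qed
  fix s assume s: "s \<in> basis_idx D ?n"
  have "complex_of_real (1 / sqrt (real ?n)) * cnj (complex_of_real (1 / sqrt (real ?n))) = complex_of_real (1 / real ?n)"
    by (simp flip: of_real_mult add: real_sqrt_mult[symmetric])
  then show "Re (dval D u ?n (rhow D u ?n w) s) = (if s \<in> E then 1 / real ?n else 0)"
    using dval_rhow[OF orth s, of w] by (simp add: w_def)
qed

theorem lemma1:
  fixes D N :: nat and \<Omega> :: "nat \<Rightarrow> nat \<Rightarrow> complex" and \<Psi> :: "nat \<Rightarrow> complex"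
    and \<beta> \<tau> :: real
  assumes "D \<ge> 2"
    and "sqnorm D \<Psi> = 1"
    and "verification_operator D \<Omega> \<Psi>"
    and "second_largest_eigenvalue D \<Omega> \<beta>"
    and "smallest_eigenvalue D \<Omega> \<tau>"
    and "N \<ge> 1"
  shows "is_max_of (eta_set D N 0 \<Omega> \<Psi>)
           (if \<tau> > 0 then \<beta> ^ N else max (\<beta> ^ N) (1 / real (N + 1)))"
proof -
  obtain u lam where all: "(u 0 = \<Psi>) \<and> (lam 0 = 1) \<and> (\<forall>a<D. \<forall>b<D. ip D (u a) (u b) = (if a = b then 1 else 0)) \<and> (\<forall>i<D. \<forall>j<D. (\<Sum>a<D. u a i * cnj (u a j)) = (if i = j then 1 else 0)) \<and> (\<forall>i<D. \<forall>j<D. \<Omega> i j = (\<Sum>a<D. of_real (lam a) * u a i * cnj (u a j))) \<and> (\<forall>a<D. 0 \<le> lam a \<and> lam a \<le> 1) \<and> (\<forall>a. 0 < a \<and> a < D \<longrightarrow> lam a \<le> \<beta>) \<and> (\<exists>b. 0 < b \<and> b < D \<and> lam b = \<beta>) \<and> (\<forall>a<D. \<tau> \<le> lam a) \<and> (\<exists>z<D. lam z = \<tau>)"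
    using spec_setup[OF assms(1-5)] by (elim exE) (erule that)
  note u0 = all[THEN conjunct1]
  note lam0 = all[THEN conjunct2, THEN conjunct1]
  note orth = all[THEN conjunct2, THEN conjunct2, THEN conjunct1]
  note comp = all[THEN conjunct2, THEN conjunct2, THEN conjunct2, THEN conjunct1]
  note Om = all[THEN conjunct2, THEN conjunct2, THEN conjunct2, THEN conjunct2, THEN conjunct1]
  note lamr = all[THEN conjunct2, THEN conjunct2, THEN conjunct2, THEN conjunct2, THEN conjunct2, THEN conjunct1]
  note lamb = all[THEN conjunct2, THEN conjunct2, THEN conjunct2, THEN conjunct2, THEN conjunct2, THEN conjunct2, THEN conjunct1]
  note bex = all[THEN conjunct2, THEN conjunct2, THEN conjunct2, THEN conjunct2, THEN conjunct2, THEN conjunct2, THEN conjunct2, THEN conjunct1]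
  note tau = all[THEN conjunct2, THEN conjunct2, THEN conjunct2, THEN conjunct2, THEN conjunct2, THEN conjunct2, THEN conjunct2, THEN conjunct2, THEN conjunct1]
  note zex = all[THEN conjunct2, THEN conjunct2, THEN conjunct2, THEN conjunct2, THEN conjunct2, THEN conjunct2, THEN conjunct2, THEN conjunct2, THEN conjunct2]
  have D0: "0 < D" using assms(1) by simp
  obtain b where b: "0 < b" "b < D" "lam b = \<beta>" using bex by blast
  obtain z where z: "z < D" "lam z = \<tau>" using zex by blast
  have b0: "0 \<le> \<beta>" using lamr b by auto
  have t0: "0 \<le> \<tau>" using lamr z by auto
  define V where "V = (if \<tau> > 0 then \<beta> ^ N else max (\<beta> ^ N) (1 / real (N + 1)))"
  let ?n = "Suc N"
  let ?B = "basis_idx D (Suc N)"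
  let ?L = "\<lambda>s. \<Prod>k<N. lam (s ! k)"
  have upper: "y \<le> V" if y: "y \<in> eta_set D N 0 \<Omega> \<Psi>" for y
  proof -
    obtain \<rho> where yr: "y = p_rho D N \<Omega> \<rho>" and dens: "density_op D ?n \<rho>"
      and pinv: "perm_invariant D ?n \<rho>" and f: "f_rho D N \<Omega> \<Psi> \<rho> \<le> 0"
      using y unfolding eta_set_def by auto
    define dd where "dd s = Re (dval D u ?n \<rho> s)" for s
    have ddnn: "\<forall>s\<in>?B. 0 \<le> dd s" using dval_nonneg[OF dens] unfolding dd_def by blast
    have "(\<Sum>s\<in>?B. dd s) = Re (\<Sum>s\<in>?B. dval D u ?n \<rho> s)" unfolding dd_def by (rule Re_sum[symmetric])
    also have "\<dots> = Re (\<Sum>xs\<in>?B. \<rho> xs xs)" by (simp only: dval_sum[OF comp])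
    also have "(\<Sum>xs\<in>?B. \<rho> xs xs) = 1" using dens unfolding density_op_def by blast
    also have "Re 1 = 1" by simp
    finally have dd1: "(\<Sum>s\<in>?B. dd s) = 1" .
    have sym: "\<forall>\<pi> s. \<pi> permutes {..<?n} \<longrightarrow> s \<in> ?B \<longrightarrow> dd (pl ?n \<pi> s) = dd s"
      using dval_pl[OF _ pinv] by (simp add: dd_def)
    have f0: "(\<Sum>s\<in>?B. (if s ! N = 0 then ?L s else 0) * dd s) \<le> 0"
      using f unfolding f_formula[OF Om u0 D0] dd_def .
    note cb = comb_bound[OF lam0 lamr lamb b0 ddnn dd1 sym f0]
    have py: "y = (\<Sum>s\<in>?B. ?L s * dd s)" unfolding yr p_formula[OF Om comp] dd_def ..
    show ?thesis
    proof (cases "\<tau> > 0")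
      case True
      hence "\<forall>a<D. lam a \<noteq> 0" using tau by force
      thus ?thesis using cb py True by (simp add: V_def)
    next
      case False
      thus ?thesis using cb py by (simp add: V_def)
    qed
  qed
  have achieve: "V \<in> eta_set D N 0 \<Omega> \<Psi>"
  proof (cases "\<tau> > 0 \<or> 1 / real (N + 1) \<le> \<beta> ^ N")
    case True
    hence VV: "V = \<beta> ^ N" by (auto simp: V_def)
    define r where "r = replicate (Suc N) b"
    define w where "w = (\<lambda>t. if t = r then (1::complex) else 0)"
    note A = ach_beta[OF orth comp b(2), where N = N, folded r_def, folded w_def]
    have bn0: "b \<noteq> 0" using b by simp
    note A = A[OF bn0]
    let ?\<rho> = "rhow D u ?n w"
    have "p_rho D N \<Omega> ?\<rho> = (\<Sum>s\<in>?B. ?L s * (if s = r then 1 else 0))"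
      unfolding p_formula[OF Om comp] using A(3) by (intro sum.cong refl) auto
    also have "\<dots> = ?L r" using A(4) by (simp add: if_distrib cong: if_cong)
    also have "\<dots> = \<beta> ^ N" using A(6) b by simp
    finally have p: "p_rho D N \<Omega> ?\<rho> = \<beta> ^ N" .
    have "f_rho D N \<Omega> \<Psi> ?\<rho> = (\<Sum>s\<in>?B. (if s ! N = 0 then ?L s else 0) * (if s = r then 1 else 0))"
      unfolding f_formula[OF Om u0 D0] using A(3) by (intro sum.cong refl) auto
    also have "\<dots> = 0" using A(5) bn0 by (intro sum.neutral) auto
    finally have f: "f_rho D N \<Omega> \<Psi> ?\<rho> \<le> 0" by simp
    show ?thesis unfolding eta_set_def VV using A(1,2) p f by force
  next
    case False
    hence t: "\<tau> = 0" and lt: "\<beta> ^ N < 1 / real (N + 1)" using t0 by auto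
    hence VV: "V = 1 / real (N + 1)" by (auto simp: V_def)
    have zl: "lam z = 0" using z t by simp
    have zn0: "z \<noteq> 0" using zl lam0 by (metis zero_neq_one)
    define e where "e = (\<lambda>k. (replicate (Suc N) (0::nat))[k := z])"
    define E where "E = e ` {..<Suc N}"
    define w where "w = (\<lambda>t. if t \<in> E then complex_of_real (1 / sqrt (real (Suc N))) else 0)"
    note A = ach_W[OF orth comp z(1) zn0, where N = N, folded e_def, folded E_def, folded w_def]
    let ?\<rho> = "rhow D u ?n w"
    have enth: "\<And>k j. j < ?n \<Longrightarrow> e k ! j = (if j = k then z else 0)"
      unfolding e_def by (simp add: nth_list_update del: replicate_Suc)
    have Le: "?L (e k) = (if k = N then 1 else 0)" if k: "k < ?n" for k
    proof (cases "k = N")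
      case True
      have "?L (e k) = (\<Prod>j<N. lam 0)" using True enth by (intro prod.cong refl) auto
      thus ?thesis using True lam0 by simp
    next
      case False
      hence "k < N" using k by simp
      hence "?L (e k) = 0" using enth[of k k] zl by (intro prod_zero) (auto intro!: bexI[of _ k])
      thus ?thesis using False by simp
    qed
    have sumE: "(\<Sum>s\<in>?B. if s \<in> E then g s else 0) = (\<Sum>k<?n. g (e k))" for g :: "nat list \<Rightarrow> real"
    proof -
      have "(\<Sum>s\<in>?B. if s \<in> E then g s else 0) = (\<Sum>s\<in>?B \<inter> E. g s)"
        by (rule sum.inter_restrict[symmetric]) simp
      also have "?B \<inter> E = E" using A(4) by blast
      also have "(\<Sum>s\<in>E. g s) = (\<Sum>k<?n. g (e k))" unfolding E_def using sum.reindex[OF A(5)] by simp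
      finally show ?thesis .
    qed
    have "p_rho D N \<Omega> ?\<rho> = (\<Sum>s\<in>?B. if s \<in> E then ?L s * (1 / real ?n) else 0)"
      unfolding p_formula[OF Om comp] using A(3) by (intro sum.cong refl) auto
    also have "\<dots> = (\<Sum>k<?n. ?L (e k) * (1 / real ?n))" by (rule sumE)
    also have "\<dots> = (\<Sum>k<?n. if k = N then 1 / real ?n else 0)" using Le by (intro sum.cong refl) auto
    also have "\<dots> = 1 / real (N + 1)" by simp
    finally have p: "p_rho D N \<Omega> ?\<rho> = 1 / real (N + 1)" .
    have "f_rho D N \<Omega> \<Psi> ?\<rho> = (\<Sum>s\<in>?B. if s \<in> E then (if s ! N = 0 then ?L s else 0) * (1 / real ?n) else 0)"
      unfolding f_formula[OF Om u0 D0] using A(3) by (intro sum.cong refl) auto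
    also have "\<dots> = (\<Sum>k<?n. (if e k ! N = 0 then ?L (e k) else 0) * (1 / real ?n))" by (rule sumE)
    also have "\<dots> = 0"
    proof (intro sum.neutral ballI)
      fix k assume k: "k \<in> {..<?n}"
      show "(if e k ! N = 0 then ?L (e k) else 0) * (1 / real ?n) = 0"
        using Le[of k] k enth[of N k] zn0 by auto
    qed
    finally have f: "f_rho D N \<Omega> \<Psi> ?\<rho> \<le> 0" by simp
    show ?thesis unfolding eta_set_def VV using A(1,2) p f by force
  qed
  show ?thesis unfolding is_max_of_def V_def[symmetric] using achieve upper by blast
qed

end
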